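(* Consider the SEIRUC system \[ \begin{aligned} S'(t)&=\Lambda-\frac{\beta S(t)}{N(t)}\bigl(I(t)+U(t)+R(t)\bigr)-\delta S(t),\\ E'(t)&=\frac{\beta S(t)}{N(t)}\bigl(I(t)+U(t)+R(t)\bigr)-(a+\delta_1+c_1)E(t),\\ I'(t)&=aE(t)-(\gamma+\delta_2+c_2)I(t),\\ R'(t)&=\gamma q I(t)-(\delta_3+c_3)R(t)+\eta U(t),\\ U'(t)&=\gamma(1-q)I(t)-(\delta_4+c_4)U(t)-\eta U(t),\\ C'(t)&=c_1E(t)+c_2I(t)+c_3R(t)+c_4U(t)-\delta_5C(t), \end{aligned} \] where $N(t)=S(t)+E(t)+I(t)+R(t)+U(t)+C(t)$. Let $\theta_1=a+\delta_1+c_1$, $\theta_2=\gamma+\delta_2+c_2$, $\theta_3=\delta_3+c_3$, $\theta_4=\delta_4+c_4+\eta$, $\mathcal{P}=\gamma(1-q)(\eta+\theta_3)+\theta_4(\theta_3+q\gamma)$, and \[ \mathcal{R}_0=\frac{a\beta\Lambda\mathcal{P}}{N\delta\theta_1\theta_2\theta_3\theta_4}, \] where $N=\Lambda/\delta$ is the total population at the disease-free equilibrium (so $\mathcal{R}_0=\frac{a\beta\mathcal{P}}{\theta_1\theta_2\theta_3\theta_4}$). Then the disease-free equilibrium $\mathcal{E}_0=(\Lambda/\delta,0,0,0,0,0)$ is locally asymptotically stable if $\mathcal{R}_0<1$ and unstable if $\mathcal{R}_0>1$.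
   Context: All parameters $\Lambda,\beta,\delta,a,\gamma,\eta,\delta_1,\dots,\delta_5,c_1,\dots,c_4$ are positive constants and $q\in[0,1]$. $\mathcal{R}_0$ is the basic reproduction number, obtained as the spectral radius of the next-generation matrix. *)

theory Defs
  imports "HOL-Analysis.Analysis"
begin

type_synonym state = "real \<times> real \<times> real \<times> real \<times> real \<times> real"
  \<comment> \<open>(S, E, I, R, U, C)\<close>

definition seiruc_rhs ::
  "real \<Rightarrow> real \<Rightarrow> real \<Rightarrow> real \<Rightarrow> real \<Rightarrow> real \<Rightarrow> real \<Rightarrow> real \<Rightarrow> real \<Rightarrow> real \<Rightarrow> real \<Rightarrow>
   real \<Rightarrow> real \<Rightarrow> real \<Rightarrow> real \<Rightarrow> real \<Rightarrow> state \<Rightarrow> state" where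
  "seiruc_rhs Lam beta delta a gamma eta d1 d2 d3 d4 d5 c1 c2 c3 c4 q =
     (\<lambda>(S, E, I, R, U, C).
        let N = S + E + I + R + U + C;
            force = beta * S / N * (I + U + R)
        in ( Lam - force - delta * S,
             force - (a + d1 + c1) * E,
             a * E - (gamma + d2 + c2) * I,
             gamma * q * I - (d3 + c3) * R + eta * U,
             gamma * (1 - q) * I - (d4 + c4) * U - eta * U,
             c1 * E + c2 * I + c3 * R + c4 * U - d5 * C ))"

definition solves_on :: "('a::real_normed_vector \<Rightarrow> 'a) \<Rightarrow> (real \<Rightarrow> 'a) \<Rightarrow> real set \<Rightarrow> bool" where
  "solves_on F x J \<longleftrightarrow> (\<forall>t\<in>J. (x has_vector_derivative F (x t)) (at t within J))"

definition lyap_stable :: "('a::real_normed_vector \<Rightarrow> 'a) \<Rightarrow> 'a \<Rightarrow> bool" where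
  "lyap_stable F e \<longleftrightarrow>
     (\<forall>eps>0. \<exists>d>0. \<forall>x T. T > 0 \<and> solves_on F x {0..<T} \<and> dist (x 0) e < d \<longrightarrow>
        (\<forall>t\<in>{0..<T}. dist (x t) e < eps))"

definition loc_asym_stable :: "('a::real_normed_vector \<Rightarrow> 'a) \<Rightarrow> 'a \<Rightarrow> bool" where
  "loc_asym_stable F e \<longleftrightarrow> lyap_stable F e \<and>
     (\<exists>d>0. \<forall>x0. dist x0 e < d \<longrightarrow>
        (\<exists>x. x 0 = x0 \<and> solves_on F x {0..}) \<and>
        (\<forall>x. x 0 = x0 \<and> solves_on F x {0..} \<longrightarrow> (x \<longlongrightarrow> e) at_top))"

definition unstable :: "('a::real_normed_vector \<Rightarrow> 'a) \<Rightarrow> 'a \<Rightarrow> bool" where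
  "unstable F e \<longleftrightarrow> \<not> lyap_stable F e"

definition seiruc_R0 ::
  "real \<Rightarrow> real \<Rightarrow> real \<Rightarrow> real \<Rightarrow> real \<Rightarrow> real \<Rightarrow> real \<Rightarrow> real \<Rightarrow> real \<Rightarrow> real \<Rightarrow>
   real \<Rightarrow> real \<Rightarrow> real \<Rightarrow> real \<Rightarrow> real \<Rightarrow> real" where
  "seiruc_R0 Lam beta delta a gamma eta d1 d2 d3 d4 c1 c2 c3 c4 q =
     (let th1 = a + d1 + c1; th2 = gamma + d2 + c2; th3 = d3 + c3; th4 = d4 + c4 + eta;
          P = gamma * (1 - q) * (eta + th3) + th4 * (th3 + q * gamma);
          N = Lam / delta
      in a * beta * Lam * P / (N * delta * th1 * th2 * th3 * th4))"

end

theory Submission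
  imports Defs "HOL-Analysis.Analysis"
begin

lemma lipschitz_cont:
  fixes G :: "'a::real_normed_vector \<Rightarrow> 'b::real_normed_vector"
  assumes "L > 0" "\<And>x y. norm (G x - G y) \<le> L * norm (x - y)"
  shows "continuous_on S G"
proof -
  have "L-lipschitz_on S G" using assms by (auto simp: lipschitz_on_def dist_norm)
  thus ?thesis by (rule lipschitz_on_continuous_on)
qed

lemma picard_local:
  fixes G :: "'a::banach \<Rightarrow> 'a"
  assumes L: "L > 0" and lip: "\<And>x y. norm (G x - G y) \<le> L * norm (x - y)"
  shows "\<exists>y. y t0 = p \<and> (\<forall>t\<in>{t0..t0+1/(2*L)}.
            (y has_vector_derivative G (y t)) (at t within {t0..t0+1/(2*L)}))"
proof -
  define h where "h = 1/(2*L)"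
  have h: "h > 0" "L * h = 1/2" using L by (auto simp: h_def)
  define c where "c t = max t0 (min (t0+h) t)" for t
  have c_in: "c t \<in> {t0..t0+h}" for t using h by (auto simp: c_def)
  have c_id: "t \<in> {t0..t0+h} \<Longrightarrow> c t = t" for t by (auto simp: c_def)
  have cc: "continuous_on UNIV c" unfolding c_def by (intro continuous_intros)
  have Gc: "continuous_on S G" for S using lipschitz_cont[OF L lip] .
  define I where "I f = (\<lambda>t. p + integral {t0..c t} (\<lambda>s. G (f s)))" for f :: "real \<Rightarrow> 'a"
  have Ider: "((\<lambda>u. p + integral {t0..u} (\<lambda>s. G (f s))) has_vector_derivative G (f t)) (at t within {t0..t0+h})"
    if "continuous_on UNIV f" "t \<in> {t0..t0+h}" for f t
  proof -
    have "continuous_on {t0..t0+h} (\<lambda>s. G (f s))"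
      using that by (intro continuous_on_compose2[OF Gc] continuous_on_subset[OF that(1)]) auto
    from integral_has_vector_derivative[OF this that(2)]
    show ?thesis by (intro derivative_eq_intros) auto
  qed
  have Icont0: "continuous_on {t0..t0+h} (\<lambda>u. p + integral {t0..u} (\<lambda>s. G (f s)))"
    if "continuous_on UNIV f" for f
    using Ider[OF that] by (meson continuous_on_eq_continuous_within has_vector_derivative_continuous)
  have Ibc: "I f \<in> bcontfun" if "continuous_on UNIV f" for f
  proof -
    have ct: "continuous_on UNIV (I f)"
      unfolding I_def using continuous_on_compose2[OF Icont0[OF that] cc] c_in by (simp add: image_subset_iff)
    have "range (I f) \<subseteq> (\<lambda>u. p + integral {t0..u} (\<lambda>s. G (f s))) ` {t0..t0+h}"
      using c_in unfolding I_def by auto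
    moreover have "compact ((\<lambda>u. p + integral {t0..u} (\<lambda>s. G (f s))) ` {t0..t0+h})"
      by (intro compact_continuous_image Icont0 that) auto
    ultimately have "bounded (range (I f))" using compact_imp_bounded bounded_subset by blast
    thus ?thesis using ct by (simp add: bcontfun_def)
  qed
  define Phi where "Phi f = Bcontfun (I (apply_bcontfun f))" for f :: "real \<Rightarrow>\<^sub>C 'a"
  have Phi_app: "apply_bcontfun (Phi f) = I (apply_bcontfun f)" for f
    unfolding Phi_def using Ibc[of "apply_bcontfun f"] by (simp add: Bcontfun_inverse)
  have contr: "dist (Phi f) (Phi g) \<le> 1/2 * dist f g" for f g
  proof (rule dist_bound)
    fix t
    let ?F = "\<lambda>s. G (apply_bcontfun f s)" and ?G = "\<lambda>s. G (apply_bcontfun g s)"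
    have i1: "?F integrable_on {t0..c t}" "?G integrable_on {t0..c t}"
      by (auto intro!: integrable_continuous_interval continuous_on_compose2[OF Gc])
    have "dist (Phi f t) (Phi g t) = norm (integral {t0..c t} ?F - integral {t0..c t} ?G)"
      by (simp add: Phi_app I_def dist_norm)
    also have "\<dots> = norm (integral {t0..c t} (\<lambda>s. ?F s - ?G s))"
      using integral_diff[OF i1] by simp
    also have "\<dots> \<le> (L * dist f g) * Henstock_Kurzweil_Integration.content (cbox t0 (c t))"
    proof (rule has_integral_bound)
      show "0 \<le> L * dist f g" using L by simp
      show "((\<lambda>s. ?F s - ?G s) has_integral integral {t0..c t} (\<lambda>s. ?F s - ?G s)) (cbox t0 (c t))"
        using i1 by (auto intro!: integrable_diff simp: cbox_interval)
      fix x assume "x \<in> cbox t0 (c t)"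
      show "norm (?F x - ?G x) \<le> L * dist f g"
      proof -
        have "norm (?F x - ?G x) \<le> L * norm (apply_bcontfun f x - apply_bcontfun g x)" by (rule lip)
        also have "\<dots> \<le> L * dist f g"
          using dist_bounded[of f x g] L by (simp add: dist_norm)
        finally show ?thesis .
      qed
    qed
    also have "\<dots> \<le> (L * dist f g) * h"
      using c_in[of t] L by (intro mult_left_mono) auto
    also have "\<dots> = 1/2 * dist f g" using h by (simp add: algebra_simps)
    finally show "dist (Phi f t) (Phi g t) \<le> 1/2 * dist f g" .
  qed
  obtain f where f: "Phi f = f" using banach_fix_type[of "1/2" Phi] contr by auto
  define y where "y = apply_bcontfun f"
  have yI: "y = I y" unfolding y_def by (metis f Phi_app)
  have "c t0 = t0" using h by (intro c_id) auto
  moreover have "y t0 = I y t0" using yI by simp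
  ultimately have "y t0 = p" unfolding I_def by simp
  moreover have "(y has_vector_derivative G (y t)) (at t within {t0..t0+h})" if "t\<in>{t0..t0+h}" for t
  proof (rule has_vector_derivative_transform[OF that])
    show "y x = p + integral {t0..x} (\<lambda>s. G (y s))" if "x \<in> {t0..t0+h}" for x
      using yI c_id[OF that] unfolding I_def by metis
    show "((\<lambda>u. p + integral {t0..u} (\<lambda>s. G (y s))) has_vector_derivative G (y t)) (at t within {t0..t0+h})"
      using Ider[OF _ that] unfolding y_def by simp
  qed
  ultimately show ?thesis unfolding h_def by blast
qed

primrec glue :: "real \<Rightarrow> (real \<Rightarrow> 'a \<Rightarrow> real \<Rightarrow> 'a) \<Rightarrow> 'a \<Rightarrow> nat \<Rightarrow> real \<Rightarrow> 'a" where
  "glue h Y p 0 = (\<lambda>t. p)"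
| "glue h Y p (Suc n) = (\<lambda>t. if t \<in> {0..real n * h} then glue h Y p n t
      else Y (real n * h) (glue h Y p n (real n * h)) t)"

lemma global_exist:
  fixes G :: "'a::banach \<Rightarrow> 'a"
  assumes L: "L > 0" and lip: "\<And>x y. norm (G x - G y) \<le> L * norm (x - y)"
  shows "\<exists>x. x 0 = p \<and> (\<forall>t\<in>{0..}. (x has_vector_derivative G (x t)) (at t within {0..}))"
proof -
  define h where "h = 1/(2*L)"
  have h: "h > 0" using L by (simp add: h_def)
  define Y where "Y t0 q = (SOME y. y t0 = q \<and> (\<forall>t\<in>{t0..t0+h}.
      (y has_vector_derivative G (y t)) (at t within {t0..t0+h})))" for t0 q
  have Y: "Y t0 q t0 = q \<and> (\<forall>t\<in>{t0..t0+h}. (Y t0 q has_vector_derivative G (Y t0 q t)) (at t within {t0..t0+h}))" for t0 q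
    using someI_ex[OF picard_local[OF L lip, of t0 q]] unfolding Y_def h_def by blast
  let ?g = "glue h Y p"
  have g0: "?g n 0 = p" for n
    using h by (induction n) auto
  have D: "\<forall>t\<in>{0..real n * h}. (?g n has_vector_derivative G (?g n t)) (at t within {0..real n * h})" for n
  proof (induction n)
    case 0
    then show ?case by (simp add: has_vector_derivative_def has_derivative_within_singleton_iff bounded_linear_scaleR_left)
  next
    case (Suc n)
    define S where "S = {0..real n * h}"
    define T where "T = {real n * h..real n * h + h}"
    have cS: "closure S = S" and cT: "closure T = T" unfolding S_def T_def by auto
    have ST: "S \<union> T = {0..real (Suc n) * h}" unfolding S_def T_def using h
      by (subst ivl_disj_un_two_touch(4)) (auto simp: algebra_simps)
    have SiT: "x \<in> S \<Longrightarrow> x \<in> T \<Longrightarrow> x = real n * h" for x unfolding S_def T_def by auto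
    have eqf: "?g (Suc n) = (\<lambda>x. if x \<in> S then ?g n x else Y (real n * h) (?g n (real n * h)) x)"
      unfolding S_def by simp
    show ?case
    proof
      fix t assume t: "t \<in> {0..real (Suc n) * h}"
      have "((\<lambda>x. if x \<in> S then ?g n x else Y (real n * h) (?g n (real n * h)) x) has_derivative
        (if t \<in> S then (\<lambda>d. d *\<^sub>R G (?g n t)) else (\<lambda>d. d *\<^sub>R G (Y (real n * h) (?g n (real n * h)) t))))
        (at t within (S \<union> T))"
      proof (rule has_derivative_If_within_closures)
        fix x assume "x \<in> S \<union> (closure S \<inter> closure T)"
        hence "x \<in> S" by (auto simp: cS cT)
        moreover have "S \<union> (closure S \<inter> closure T) = S" by (auto simp: cS cT)
        ultimately show "(?g n has_derivative (\<lambda>d. d *\<^sub>R G (?g n x))) (at x within S \<union> (closure S \<inter> closure T))"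
          using Suc.IH unfolding S_def has_vector_derivative_def by auto
      next
        fix x assume "x \<in> T \<union> (closure S \<inter> closure T)"
        hence "x \<in> T" by (auto simp: cS cT)
        moreover have "T \<union> (closure S \<inter> closure T) = T" by (auto simp: cS cT)
        ultimately show "(Y (real n * h) (?g n (real n * h)) has_derivative (\<lambda>d. d *\<^sub>R G (Y (real n * h) (?g n (real n * h)) x))) (at x within T \<union> (closure S \<inter> closure T))"
          using Y unfolding T_def has_vector_derivative_def by auto
      next
        fix x assume "x \<in> closure S" "x \<in> closure T"
        hence "x = real n * h" using SiT by (auto simp: cS cT)
        thus "?g n x = Y (real n * h) (?g n (real n * h)) x" using Y by simp
        thus "(\<lambda>d. d *\<^sub>R G (?g n x)) = (\<lambda>d. d *\<^sub>R G (Y (real n * h) (?g n (real n * h)) x))" by simp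
      next
        show "t \<in> S \<union> T" using t ST by simp
      qed
      moreover have "(if t \<in> S then (\<lambda>d. d *\<^sub>R G (?g n t)) else (\<lambda>d. d *\<^sub>R G (Y (real n * h) (?g n (real n * h)) t)))
          = (\<lambda>d. d *\<^sub>R G (?g (Suc n) t))" unfolding eqf by auto
      ultimately show "(?g (Suc n) has_vector_derivative G (?g (Suc n) t)) (at t within {0..real (Suc n) * h})"
        unfolding has_vector_derivative_def eqf ST by simp
    qed
  qed
  have cons: "m \<le> n \<Longrightarrow> t \<in> {0..real m * h} \<Longrightarrow> ?g n t = ?g m t" for m n t
  proof (induction n)
    case 0 thus ?case by simp
  next
    case (Suc k)
    show ?case
    proof (cases "m = Suc k")
      case False
      hence "m \<le> k" using Suc.prems by simp
      hence "t \<in> {0..real k * h}" using Suc.prems h by (auto intro: order_trans mult_right_mono)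
      thus ?thesis using Suc.IH \<open>m \<le> k\<close> Suc.prems by simp
    qed simp
  qed
  define M where "M t = nat \<lceil>t / h\<rceil> + 1" for t
  have M: "t < real (M t) * h" if "t \<ge> 0" for t
  proof -
    have a: "t / h \<le> real_of_int \<lceil>t / h\<rceil>" by simp
    have "0 \<le> t / h" using that h by simp
    hence "0 \<le> \<lceil>t / h\<rceil>" by simp
    hence "real (M t) = real_of_int \<lceil>t / h\<rceil> + 1" unfolding M_def by simp
    hence "t / h < real (M t)" using a by linarith
    thus ?thesis using h by (simp add: pos_divide_less_eq)
  qed
  define x where "x t = ?g (M t) t" for t
  have xeq: "x s = ?g m s" if "s \<in> {0..real m * h}" for s m
  proof -
    have "s \<in> {0..real (min m (M s)) * h}" using that M[of s] h by (auto simp: min_def)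
    hence "?g (M s) s = ?g (min m (M s)) s" "?g m s = ?g (min m (M s)) s"
      by (auto intro!: cons)
    thus ?thesis unfolding x_def by simp
  qed
  have "x 0 = p" using xeq[of 0 0] g0 by simp
  moreover have "(x has_vector_derivative G (x t)) (at t within {0..})" if "t \<in> {0..}" for t
  proof -
    let ?m = "M t"
    have tm: "t \<in> {0..real ?m * h}" using M[of t] that by auto
    have "(x has_vector_derivative G (x t)) (at t within {0..real ?m * h})"
    proof (rule has_vector_derivative_transform[OF tm])
      show "x s = ?g ?m s" if "s \<in> {0..real ?m * h}" for s using xeq[OF that] .
      show "(?g ?m has_vector_derivative G (x t)) (at t within {0..real ?m * h})"
        using D[of ?m] tm xeq[OF tm] by simp
    qed
    moreover have "at t within {0..real ?m * h} = at t within {0..}"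
      using M[of t] that by (intro at_within_nhd[of _ "{..<real ?m * h}"]) auto
    ultimately show ?thesis by simp
  qed
  ultimately show ?thesis by blast
qed

lemma cont_induct:
  fixes P :: "real \<Rightarrow> bool"
  assumes closedstep: "\<And>t. 0 \<le> t \<Longrightarrow> t < T \<Longrightarrow> (\<forall>s\<in>{0..<t}. P s) \<Longrightarrow> P t"
    and openstep: "\<And>t. 0 \<le> t \<Longrightarrow> t < T \<Longrightarrow> (\<forall>s\<in>{0..t}. P s) \<Longrightarrow>
          \<exists>d>0. \<forall>s. t \<le> s \<and> s < t + d \<and> s < T \<longrightarrow> P s"
    and t: "0 \<le> t" "t < T"
  shows "P t"
proof (rule ccontr)
  assume nP: "\<not> P t"
  define A where "A = {s. 0 \<le> s \<and> s < T \<and> \<not> P s}"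
  have tA: "t \<in> A" using t nP by (simp add: A_def)
  have bdd: "bdd_below A" unfolding A_def by (rule bdd_belowI[of _ 0]) auto
  define u where "u = Inf A"
  have ule: "u \<le> a" if "a \<in> A" for a using cInf_lower[OF that bdd] by (simp add: u_def)
  have u0: "0 \<le> u" unfolding u_def using tA by (intro cINF_greatest[of A _ id, simplified] cInf_greatest) (auto simp: A_def)
  have uT: "u < T" using ule[OF tA] t by simp
  have below: "P s" if "0 \<le> s" "s < u" for s
    using that ule uT by (force simp: A_def)
  have Pu: "P u" using closedstep[OF u0 uT] below by auto
  have "\<forall>s\<in>{0..u}. P s" using below Pu by (auto simp: le_less)
  then obtain d where d: "d > 0" "\<forall>s. u \<le> s \<and> s < u + d \<and> s < T \<longrightarrow> P s"
    using openstep[OF u0 uT] by blast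
  have "u + d \<le> a" if "a \<in> A" for a
  proof (rule ccontr)
    assume "\<not> u + d \<le> a"
    thus False using that d ule[OF that] by (auto simp: A_def)
  qed
  hence "u + d \<le> u" unfolding u_def using tA by (intro cInf_greatest) auto
  thus False using d by simp
qed

lemma barrier:
  fixes hs :: "'i \<Rightarrow> real \<Rightarrow> real" and K :: "'i set"
  assumes fin: "finite K"
    and cont: "\<And>k t. k \<in> K \<Longrightarrow> 0 \<le> t \<Longrightarrow> t < T \<Longrightarrow> continuous (at t within {0..<T}) (hs k)"
    and init: "\<And>k. k \<in> K \<Longrightarrow> hs k 0 < 0"
    and der: "\<And>k t. k \<in> K \<Longrightarrow> 0 < t \<Longrightarrow> t < T \<Longrightarrow> (\<forall>j\<in>K. hs j t \<le> 0) \<Longrightarrow> hs k t = 0 \<Longrightarrow>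
              \<exists>d<0. (hs k has_real_derivative d) (at t)"
    and t: "0 \<le> t" "t < T"
  shows "\<forall>k\<in>K. hs k t < 0"
proof (rule cont_induct[of T "\<lambda>t. \<forall>k\<in>K. hs k t < 0", OF _ _ t])
  fix t assume t0: "0 \<le> t" and tT: "t < T" and IH: "\<forall>s\<in>{0..<t}. \<forall>k\<in>K. hs k s < 0"
  show "\<forall>k\<in>K. hs k t < 0"
  proof (cases "t = 0")
    case True thus ?thesis using init by simp
  next
    case False
    hence tpos: "t > 0" using t0 by simp
    have le: "hs j t \<le> 0" if j: "j \<in> K" for j
    proof (rule ccontr)
      assume "\<not> hs j t \<le> 0"
      hence "eventually (\<lambda>s. 0 < hs j s) (at t within {0..<T})"
        using cont[OF j t0 tT] unfolding continuous_within by (intro order_tendstoD(1)) auto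
      then obtain d where d: "d > 0" "\<forall>s\<in>{0..<T}. s \<noteq> t \<and> dist s t < d \<longrightarrow> 0 < hs j s"
        unfolding eventually_at by blast
      define s where "s = t - min d t / 2"
      have "s \<in> {0..<T}" "s \<noteq> t" "dist s t < d" using d tpos tT by (auto simp: s_def dist_real_def)
      hence "0 < hs j s" using d by blast
      moreover have "s \<in> {0..<t}" using d tpos by (auto simp: s_def)
      ultimately show False using IH j by force
    qed
    show ?thesis
    proof
      fix k assume k: "k \<in> K"
      show "hs k t < 0"
      proof (rule ccontr)
        assume "\<not> hs k t < 0"
        hence "hs k t = 0" using le[OF k] by simp
        then obtain d where d: "d < 0" "(hs k has_real_derivative d) (at t)"
          using der[OF k tpos tT] le by blast
        then obtain e where e: "e > 0" "\<forall>h>0. h < e \<longrightarrow> hs k t < hs k (t - h)"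
          using DERIV_neg_dec_left by blast
        define h where "h = min e t / 2"
        have "hs k t < hs k (t - h)" using e tpos by (auto simp: h_def)
        moreover have "t - h \<in> {0..<t}" using e tpos by (auto simp: h_def)
        hence "hs k (t - h) < 0" using IH k by blast
        ultimately show False using \<open>hs k t = 0\<close> by linarith
      qed
    qed
  qed
next
  fix t assume t0: "0 \<le> t" and tT: "t < T" and P: "\<forall>s\<in>{0..t}. \<forall>k\<in>K. hs k s < 0"
  have Pt: "\<forall>k\<in>K. hs k t < 0" using P t0 by auto
  have "eventually (\<lambda>s. \<forall>k\<in>K. hs k s < 0) (at t within {0..<T})"
  proof (rule eventually_ball_finite[OF fin], rule ballI)
    fix k assume k: "k \<in> K"
    show "eventually (\<lambda>s. hs k s < 0) (at t within {0..<T})"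
      using cont[OF k t0 tT] Pt k unfolding continuous_within by (intro order_tendstoD(2)) auto
  qed
  then obtain d where d: "d > 0" "\<forall>s\<in>{0..<T}. s \<noteq> t \<and> dist s t < d \<longrightarrow> (\<forall>k\<in>K. hs k s < 0)"
    unfolding eventually_at by blast
  show "\<exists>d>0. \<forall>s. t \<le> s \<and> s < t + d \<and> s < T \<longrightarrow> (\<forall>k\<in>K. hs k s < 0)"
  proof (intro exI[of _ d] conjI allI impI)
    fix s assume s: "t \<le> s \<and> s < t + d \<and> s < T"
    show "\<forall>k\<in>K. hs k s < 0"
    proof (cases "s = t")
      case True thus ?thesis using Pt by simp
    next
      case False thus ?thesis using d s t0 by (auto simp: dist_real_def)
    qed
  qed (use d in auto)
qed

lemma sg_le_abs: "\<sigma> = 1 \<or> \<sigma> = -1 \<Longrightarrow> \<sigma> * (y::real) \<le> \<bar>y\<bar>"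
  by auto

lemma sg_sq: "\<sigma> = 1 \<or> \<sigma> = -1 \<Longrightarrow> \<sigma> * (\<sigma> * (y::real)) = y"
  by auto

lemma force_bound:
  fixes beta g A B eps :: real
  assumes "beta > 0" "0 \<le> g" "g \<le> 1 + eps" "\<bar>A\<bar> \<le> B"
  shows "\<bar>beta * g * A\<bar> \<le> beta * (1 + eps) * B"
proof -
  have "\<bar>beta * g * A\<bar> = beta * (g * \<bar>A\<bar>)" using assms by (simp add: abs_mult)
  also have "g * \<bar>A\<bar> \<le> (1 + eps) * B" using assms by (intro mult_mono) auto
  hence "beta * (g * \<bar>A\<bar>) \<le> beta * ((1 + eps) * B)" using assms by simp
  finally show ?thesis by simp
qed

lemma stab_S:
  fixes s A sg rho wS V beta g eps delta kappa :: real
  assumes sg: "sg = 1 \<or> sg = -1" and "rho > 0" "beta > 0" "0 \<le> g" "g \<le> 1 + eps"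
    "\<bar>A\<bar> \<le> rho * V" "beta * (1 + eps) * V < (delta - kappa) * wS" and s: "s = sg * rho * wS"
  shows "sg * (- delta * s - beta * g * A) < - kappa * rho * wS"
proof -
  have "sg * (- delta * s - beta * g * A) = - delta * rho * wS - sg * (beta * g * A)"
    using sg s by (auto simp: algebra_simps)
  also have "sg * (beta * g * A) \<ge> - \<bar>beta * g * A\<bar>" using sg by auto
  hence "- sg * (beta * g * A) \<le> beta * (1 + eps) * (rho * V)"
    using force_bound[OF assms(3,4,5,6)] by linarith
  hence "- delta * rho * wS - sg * (beta * g * A) \<le> - delta * rho * wS + rho * (beta * (1 + eps) * V)"
    by (simp add: algebra_simps)
  also have "\<dots> < - delta * rho * wS + rho * ((delta - kappa) * wS)"
    using assms by simp
  also have "\<dots> = - kappa * rho * wS" by (simp add: algebra_simps)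
  finally show ?thesis .
qed

lemma stab_E:
  fixes E A sg rho vE V beta g eps th1 kappa :: real
  assumes sg: "sg = 1 \<or> sg = -1" and "rho > 0" "beta > 0" "0 \<le> g" "g \<le> 1 + eps"
    "\<bar>A\<bar> \<le> rho * V" "beta * (1 + eps) * V < (th1 - kappa) * vE" and s: "E = sg * rho * vE"
  shows "sg * (beta * g * A - th1 * E) < - kappa * rho * vE"
proof -
  have "sg * (beta * g * A - th1 * E) = sg * (beta * g * A) - th1 * rho * vE"
    using sg s by (auto simp: algebra_simps)
  also have "sg * (beta * g * A) \<le> \<bar>beta * g * A\<bar>" using sg by auto
  hence "sg * (beta * g * A) \<le> beta * (1 + eps) * (rho * V)"
    using force_bound[OF assms(3,4,5,6)] by linarith
  hence "sg * (beta * g * A) - th1 * rho * vE \<le> rho * (beta * (1 + eps) * V) - th1 * rho * vE"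
    by (simp add: algebra_simps)
  also have "\<dots> < rho * ((th1 - kappa) * vE) - th1 * rho * vE"
    using assms by simp
  also have "\<dots> = - kappa * rho * vE" by (simp add: algebra_simps)
  finally show ?thesis .
qed

lemma lin_term: "c \<ge> 0 \<Longrightarrow> \<bar>z\<bar> \<le> rho * w \<Longrightarrow> sg = 1 \<or> sg = -1 \<Longrightarrow> sg * (c * z) \<le> c * (rho * w)"
  for c z rho w sg :: real
proof -
  assume a: "c \<ge> 0" "\<bar>z\<bar> \<le> rho * w" "sg = 1 \<or> sg = -1"
  have "sg * (c * z) \<le> \<bar>c * z\<bar>" using a(3) by auto
  also have "\<dots> = c * \<bar>z\<bar>" using a by (simp add: abs_mult)
  also have "\<dots> \<le> c * (rho * w)" using a by (intro mult_left_mono) auto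
  finally show ?thesis .
qed

lemma stab_I:
  fixes E I sg rho vE vI a th2 kappa :: real
  assumes sg: "sg = 1 \<or> sg = -1" and "rho > 0" "a > 0" "\<bar>E\<bar> \<le> rho * vE"
    "a * vE < (th2 - kappa) * vI" and s: "I = sg * rho * vI"
  shows "sg * (a * E - th2 * I) < - kappa * rho * vI"
proof -
  have e1: "sg * (a * E - th2 * I) = sg * (a * E) - th2 * (rho * vI)"
    using sg s by (auto simp: algebra_simps)
  have e2: "sg * (a * E) \<le> a * (rho * vE)" using assms by (intro lin_term) auto
  have e3: "a * (rho * vE) - th2 * (rho * vI) < - kappa * rho * vI"
    using mult_strict_left_mono[OF assms(5) assms(2)] by (simp add: algebra_simps)
  show ?thesis using e1 e2 e3 by linarith
qed

lemma stab_R: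
  fixes I R U sg rho vI vR vU gq eta th3 kappa :: real
  assumes sg: "sg = 1 \<or> sg = -1" and "rho > 0" "gq \<ge> 0" "eta > 0" "\<bar>I\<bar> \<le> rho * vI" "\<bar>U\<bar> \<le> rho * vU"
    "gq * vI + eta * vU < (th3 - kappa) * vR" and s: "R = sg * rho * vR"
  shows "sg * (gq * I - th3 * R + eta * U) < - kappa * rho * vR"
proof -
  have e1: "sg * (gq * I - th3 * R + eta * U) = sg * (gq * I) + sg * (eta * U) - th3 * (rho * vR)"
    using sg s by (auto simp: algebra_simps)
  have e2: "sg * (gq * I) \<le> gq * (rho * vI)" using assms by (intro lin_term) auto
  have e3: "sg * (eta * U) \<le> eta * (rho * vU)" using assms by (intro lin_term) auto
  have e4: "gq * (rho * vI) + eta * (rho * vU) - th3 * (rho * vR) < - kappa * rho * vR"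
    using mult_strict_left_mono[OF assms(7) assms(2)] by (simp add: algebra_simps)
  show ?thesis using e1 e2 e3 e4 by linarith
qed

lemma stab_U:
  fixes I U sg rho vI vU gq th4 kappa :: real
  assumes sg: "sg = 1 \<or> sg = -1" and "rho > 0" "gq \<ge> 0" "\<bar>I\<bar> \<le> rho * vI"
    "gq * vI < (th4 - kappa) * vU" and s: "U = sg * rho * vU"
  shows "sg * (gq * I - th4 * U) < - kappa * rho * vU"
proof -
  have e1: "sg * (gq * I - th4 * U) = sg * (gq * I) - th4 * (rho * vU)"
    using sg s by (auto simp: algebra_simps)
  have e2: "sg * (gq * I) \<le> gq * (rho * vI)" using assms by (intro lin_term) auto
  have e3: "gq * (rho * vI) - th4 * (rho * vU) < - kappa * rho * vU"
    using mult_strict_left_mono[OF assms(5) assms(2)] by (simp add: algebra_simps)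
  show ?thesis using e1 e2 e3 by linarith
qed

lemma stab_C:
  fixes E I R U C sg rho vE vI vR vU wC c1 c2 c3 c4 d5 kappa :: real
  assumes sg: "sg = 1 \<or> sg = -1" and "rho > 0" "c1 > 0" "c2 > 0" "c3 > 0" "c4 > 0"
    "\<bar>E\<bar> \<le> rho * vE" "\<bar>I\<bar> \<le> rho * vI" "\<bar>R\<bar> \<le> rho * vR" "\<bar>U\<bar> \<le> rho * vU"
    "c1 * vE + c2 * vI + c3 * vR + c4 * vU < (d5 - kappa) * wC" and s: "C = sg * rho * wC"
  shows "sg * (c1 * E + c2 * I + c3 * R + c4 * U - d5 * C) < - kappa * rho * wC"
proof -
  have e1: "sg * (c1 * E + c2 * I + c3 * R + c4 * U - d5 * C) =
      sg * (c1 * E) + sg * (c2 * I) + sg * (c3 * R) + sg * (c4 * U) - d5 * (rho * wC)"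
    using sg s by (auto simp: algebra_simps)
  have "sg * (c1 * E) \<le> c1 * (rho * vE)" using assms by (intro lin_term) auto
  moreover have "sg * (c2 * I) \<le> c2 * (rho * vI)" using assms by (intro lin_term) auto
  moreover have "sg * (c3 * R) \<le> c3 * (rho * vR)" using assms by (intro lin_term) auto
  moreover have "sg * (c4 * U) \<le> c4 * (rho * vU)" using assms by (intro lin_term) auto
  moreover have "c1 * (rho * vE) + c2 * (rho * vI) + c3 * (rho * vR) + c4 * (rho * vU) - d5 * (rho * wC) < - kappa * rho * wC"
    using mult_strict_left_mono[OF assms(11) assms(2)] by (simp add: algebra_simps)
  ultimately show ?thesis using e1 by linarith
qed

lemma inst_E:
  fixes E I R U g rho mu vE vR vU beta eps th1 kappa :: real
  assumes "rho > 0" "mu > 0" "beta > 0" "eps \<le> 1" "1 - eps \<le> g" "I \<ge> rho" "R \<ge> rho * vR" "U \<ge> rho * vU + mu"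
    "vR \<ge> 0" "vU \<ge> 0" "beta * (1 - eps) * (1 + vR + vU) > (th1 + kappa) * vE" "E = rho * vE"
  shows "beta * g * (I + U + R) - th1 * E > kappa * rho * vE"
proof -
  have A: "I + U + R \<ge> rho * (1 + vR + vU)" using assms by (simp add: algebra_simps)
  have A0: "rho * (1 + vR + vU) \<ge> 0" using assms by simp
  have e1: "beta * (1 - eps) * (rho * (1 + vR + vU)) \<le> beta * g * (I + U + R)"
    using assms A A0 by (intro mult_mono mult_left_mono) auto
  have e2: "kappa * rho * vE + th1 * (rho * vE) < beta * (1 - eps) * (rho * (1 + vR + vU))"
    using mult_strict_left_mono[OF assms(11) assms(1)] by (simp add: algebra_simps)
  show ?thesis using e1 e2 assms(12) by simp
qed

lemma inst_I:
  fixes E I rho vE a th2 kappa :: real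
  assumes "rho > 0" "a > 0" "E \<ge> rho * vE" "a * vE > th2 + kappa" "I = rho"
  shows "a * E - th2 * I > kappa * rho"
proof -
  have e1: "a * (rho * vE) \<le> a * E" using assms by simp
  have e2: "kappa * rho + th2 * rho < a * (rho * vE)"
    using mult_strict_left_mono[OF assms(4) assms(1)] by (simp add: algebra_simps)
  show ?thesis using e1 e2 assms(5) by simp
qed

lemma inst_R:
  fixes I R U rho mu vR vU gq eta th3 kappa :: real
  assumes "rho > 0" "mu > 0" "gq \<ge> 0" "eta > 0" "I \<ge> rho" "U \<ge> rho * vU + mu"
    "th3 + kappa > 0" "vR = (gq + eta * vU) / (th3 + kappa)" "R = rho * vR"
  shows "gq * I - th3 * R + eta * U > kappa * rho * vR"
proof -
  have v: "(th3 + kappa) * vR = gq + eta * vU" using assms by simp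
  have e1: "gq * rho \<le> gq * I" using assms by (intro mult_left_mono) auto
  have e2: "eta * (rho * vU + mu) \<le> eta * U" using assms by (intro mult_left_mono) auto
  have e3: "th3 * (rho * vR) + kappa * rho * vR = gq * rho + eta * (rho * vU)"
    using arg_cong[OF v, of "\<lambda>z. rho * z"] by (simp add: algebra_simps)
  have e4: "eta * (rho * vU + mu) = eta * (rho * vU) + eta * mu" by (simp add: algebra_simps)
  have "eta * mu > 0" using assms by simp
  thus ?thesis using e1 e2 e3 e4 assms(9) by simp
qed

lemma inst_U:
  fixes I U rho mu vU gq th4 kappa :: real
  assumes "rho > 0" "mu > 0" "gq \<ge> 0" "I \<ge> rho" "th4 + kappa > 0" "vU = gq / (th4 + kappa)" "U = rho * vU + mu"
  shows "gq * I - th4 * U > kappa * rho * vU - (th4 + 1) * mu"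
proof -
  have v: "(th4 + kappa) * vU = gq" using assms by simp
  have e1: "gq * rho \<le> gq * I" using assms by (intro mult_left_mono) auto
  have e2: "th4 * (rho * vU) + kappa * rho * vU = gq * rho"
    using arg_cong[OF v, of "\<lambda>z. rho * z"] by (simp add: algebra_simps)
  have e3: "th4 * U = th4 * (rho * vU) + th4 * mu" using assms(7) by (simp add: algebra_simps)
  have e4: "(th4 + 1) * mu = th4 * mu + mu" by (simp add: algebra_simps)
  show ?thesis using e1 e2 e3 e4 assms(2) by linarith
qed

lemma dist_pair_le: "dist (a, b) (c, d) \<le> dist a c + dist b d"
  for a c :: "'a::metric_space" and b d :: "'b::metric_space"
  using sqrt_sum_squares_le_sum_abs[of "dist a c" "dist b d"] by (simp add: dist_Pair_Pair)

lemma dist_pair_ge: "dist a c \<le> dist (a, b) (c, d)" "dist b d \<le> dist (a, b) (c, d)"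
  for a c :: "'a::metric_space" and b d :: "'b::metric_space"
  using dist_fst_le[of "(a,b)" "(c,d)"] dist_snd_le[of "(a,b)" "(c,d)"] by auto

lemma dist6_le:
  fixes sa sb sc sd se sf ta tb tc td te tf :: real
  shows "dist (sa, sb, sc, sd, se, sf) (ta, tb, tc, td, te, tf)
     \<le> \<bar>sa - ta\<bar> + \<bar>sb - tb\<bar> + \<bar>sc - tc\<bar> + \<bar>sd - td\<bar> + \<bar>se - te\<bar> + \<bar>sf - tf\<bar>"
proof -
  have "dist (sa, sb, sc, sd, se, sf) (ta, tb, tc, td, te, tf) \<le> dist sa ta + dist (sb, sc, sd, se, sf) (tb, tc, td, te, tf)"
    by (rule dist_pair_le)
  moreover have "dist (sb, sc, sd, se, sf) (tb, tc, td, te, tf) \<le> dist sb tb + dist (sc, sd, se, sf) (tc, td, te, tf)"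
    by (rule dist_pair_le)
  moreover have "dist (sc, sd, se, sf) (tc, td, te, tf) \<le> dist sc tc + dist (sd, se, sf) (td, te, tf)"
    by (rule dist_pair_le)
  moreover have "dist (sd, se, sf) (td, te, tf) \<le> dist sd td + dist (se, sf) (te, tf)"
    by (rule dist_pair_le)
  moreover have "dist (se, sf) (te, tf) \<le> dist se te + dist sf tf"
    by (rule dist_pair_le)
  ultimately show ?thesis by (simp add: dist_real_def)
qed

lemma dist6_ge:
  fixes sa sb sc sd se sf ta tb tc td te tf :: real
  defines "D \<equiv> dist (sa, sb, sc, sd, se, sf) (ta, tb, tc, td, te, tf)"
  shows "\<bar>sa - ta\<bar> \<le> D" "\<bar>sb - tb\<bar> \<le> D" "\<bar>sc - tc\<bar> \<le> D" "\<bar>sd - td\<bar> \<le> D"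
    "\<bar>se - te\<bar> \<le> D" "\<bar>sf - tf\<bar> \<le> D"
proof -
  note g = dist_pair_ge
  have a1: "dist sa ta \<le> D" "dist (sb, sc, sd, se, sf) (tb, tc, td, te, tf) \<le> D" unfolding D_def by (rule g)+
  have a2: "dist sb tb \<le> D" "dist (sc, sd, se, sf) (tc, td, te, tf) \<le> D"
    using g[where a=sb and c=tb and b="(sc, sd, se, sf)" and d="(tc, td, te, tf)"] a1(2) by linarith+
  have a3: "dist sc tc \<le> D" "dist (sd, se, sf) (td, te, tf) \<le> D"
    using g[where a=sc and c=tc and b="(sd, se, sf)" and d="(td, te, tf)"] a2(2) by linarith+
  have a4: "dist sd td \<le> D" "dist (se, sf) (te, tf) \<le> D"
    using g[where a=sd and c=td and b="(se, sf)" and d="(te, tf)"] a3(2) by linarith+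
  have a5: "dist se te \<le> D" "dist sf tf \<le> D"
    using g[where a=se and c=te and b="sf" and d="tf"] a4(2) by linarith+
  show "\<bar>sa - ta\<bar> \<le> D" "\<bar>sb - tb\<bar> \<le> D" "\<bar>sc - tc\<bar> \<le> D" "\<bar>sd - td\<bar> \<le> D"
    "\<bar>se - te\<bar> \<le> D" "\<bar>sf - tf\<bar> \<le> D"
    using a1 a2 a3 a4 a5 by (simp_all add: dist_real_def)
qed

lemma vd_fst: "(x has_vector_derivative v) F \<Longrightarrow> ((\<lambda>t. fst (x t)) has_vector_derivative fst v) F"
  unfolding has_vector_derivative_def by (drule has_derivative_fst) simp

lemma vd_snd: "(x has_vector_derivative v) F \<Longrightarrow> ((\<lambda>t. snd (x t)) has_vector_derivative snd v) F"
  unfolding has_vector_derivative_def by (drule has_derivative_snd) simp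

definition cS :: "state \<Rightarrow> real" where "cS x = fst x"
definition cE :: "state \<Rightarrow> real" where "cE x = fst (snd x)"
definition cI :: "state \<Rightarrow> real" where "cI x = fst (snd (snd x))"
definition cR :: "state \<Rightarrow> real" where "cR x = fst (snd (snd (snd x)))"
definition cU :: "state \<Rightarrow> real" where "cU x = fst (snd (snd (snd (snd x))))"
definition cC :: "state \<Rightarrow> real" where "cC x = snd (snd (snd (snd (snd x))))"

lemmas comp_defs = cS_def cE_def cI_def cR_def cU_def cC_def

lemma comp_simps[simp]:
  "cS (S, E, I, R, U, C) = S" "cE (S, E, I, R, U, C) = E" "cI (S, E, I, R, U, C) = I"
  "cR (S, E, I, R, U, C) = R" "cU (S, E, I, R, U, C) = U" "cC (S, E, I, R, U, C) = C"
  by (simp_all add: comp_defs)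

lemma state_eq: "x = (cS x, cE x, cI x, cR x, cU x, cC x)"
  by (simp add: comp_defs)

lemma comp_deriv:
  assumes "(x has_vector_derivative v) F"
  shows "((\<lambda>t. cS (x t)) has_real_derivative cS v) F" "((\<lambda>t. cE (x t)) has_real_derivative cE v) F"
    "((\<lambda>t. cI (x t)) has_real_derivative cI v) F" "((\<lambda>t. cR (x t)) has_real_derivative cR v) F"
    "((\<lambda>t. cU (x t)) has_real_derivative cU v) F" "((\<lambda>t. cC (x t)) has_real_derivative cC v) F"
  unfolding comp_defs has_real_derivative_iff_has_vector_derivative
  by (intro vd_fst vd_snd assms)+

lemma dist_e_le:
  "dist x (S0, 0, 0, 0, 0, 0) \<le> \<bar>cS x - S0\<bar> + \<bar>cE x\<bar> + \<bar>cI x\<bar> + \<bar>cR x\<bar> + \<bar>cU x\<bar> + \<bar>cC x\<bar>"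
  using dist6_le[where sa="cS x" and sb="cE x" and sc="cI x" and sd="cR x" and se="cU x" and sf="cC x" and ta=S0 and tb=0 and tc=0 and td=0 and te=0 and tf=0]
  by (simp add: comp_defs)

lemma dist_e_ge:
  fixes x :: state and S0 :: real
  defines "D \<equiv> dist x (S0, 0, 0, 0, 0, 0)"
  shows "\<bar>cS x - S0\<bar> \<le> D" "\<bar>cE x\<bar> \<le> D" "\<bar>cI x\<bar> \<le> D" "\<bar>cR x\<bar> \<le> D" "\<bar>cU x\<bar> \<le> D" "\<bar>cC x\<bar> \<le> D"
  using dist6_ge[where sa="cS x" and sb="cE x" and sc="cI x" and sd="cR x" and se="cU x" and sf="cC x" and ta=S0 and tb=0 and tc=0 and td=0 and te=0 and tf=0]
  unfolding D_def by (simp_all add: comp_defs)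

lemma norm_le_comps:
  fixes x y :: state
  shows "norm (x - y) \<le> \<bar>cS x - cS y\<bar> + \<bar>cE x - cE y\<bar> + \<bar>cI x - cI y\<bar> + \<bar>cR x - cR y\<bar> + \<bar>cU x - cU y\<bar> + \<bar>cC x - cC y\<bar>"
  using dist6_le[where sa="cS x" and sb="cE x" and sc="cI x" and sd="cR x" and se="cU x" and sf="cC x" and ta="cS y" and tb="cE y" and tc="cI y" and td="cR y" and te="cU y" and tf="cC y"]
  by (simp add: comp_defs dist_norm)

lemma comps_le_norm:
  fixes x y :: state
  shows "\<bar>cS x - cS y\<bar> \<le> norm (x - y)" "\<bar>cE x - cE y\<bar> \<le> norm (x - y)" "\<bar>cI x - cI y\<bar> \<le> norm (x - y)"
    "\<bar>cR x - cR y\<bar> \<le> norm (x - y)" "\<bar>cU x - cU y\<bar> \<le> norm (x - y)" "\<bar>cC x - cC y\<bar> \<le> norm (x - y)"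
  using dist6_ge[where sa="cS x" and sb="cE x" and sc="cI x" and sd="cR x" and se="cU x" and sf="cC x" and ta="cS y" and tb="cE y" and tc="cI y" and td="cR y" and te="cU y" and tf="cC y"]
  by (simp_all add: comp_defs dist_norm)

definition inbox :: "real \<Rightarrow> real \<Rightarrow> state \<Rightarrow> bool" where
  "inbox S0 r x \<longleftrightarrow> \<bar>cS x - S0\<bar> \<le> r \<and> \<bar>cE x\<bar> \<le> r \<and> \<bar>cI x\<bar> \<le> r \<and> \<bar>cR x\<bar> \<le> r \<and> \<bar>cU x\<bar> \<le> r \<and> \<bar>cC x\<bar> \<le> r"

definition NN :: "state \<Rightarrow> real" where
  "NN x = cS x + cE x + cI x + cR x + cU x + cC x"

definition AA :: "state \<Rightarrow> real" where
  "AA x = cI x + cU x + cR x"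

lemma box_bounds:
  assumes "S0 > 0" "0 < eps" "eps \<le> 1" "0 < r" "20 * r \<le> eps * S0" "inbox S0 r x"
  shows "NN x \<ge> S0 / 2" "NN x \<le> 2 * S0" "\<bar>cS x\<bar> \<le> 2 * S0" "\<bar>AA x\<bar> \<le> 2 * S0" "\<bar>NN x\<bar> \<le> 2 * S0"
    "cS x / NN x \<le> 1 + eps" "1 - eps \<le> cS x / NN x" "0 \<le> cS x / NN x"
proof -
  have b: "\<bar>cS x - S0\<bar> \<le> r" "\<bar>cE x\<bar> \<le> r" "\<bar>cI x\<bar> \<le> r" "\<bar>cR x\<bar> \<le> r" "\<bar>cU x\<bar> \<le> r" "\<bar>cC x\<bar> \<le> r"
    using assms(6) by (auto simp: inbox_def)
  have er: "eps * r \<le> r" using assms by simp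
  have rS: "20 * r \<le> S0" using assms mult_right_mono[of eps 1 S0] by linarith
  have N1: "NN x \<ge> S0 - 6 * r" "NN x \<le> S0 + 6 * r" using b unfolding NN_def by linarith+
  show N2: "NN x \<ge> S0 / 2" "NN x \<le> 2 * S0" using N1 rS by linarith+
  show "\<bar>cS x\<bar> \<le> 2 * S0" "\<bar>AA x\<bar> \<le> 2 * S0" "\<bar>NN x\<bar> \<le> 2 * S0" using b rS N2 assms(1) unfolding AA_def by linarith+
  have Npos: "NN x > 0" using N2 assms(1) by linarith
  have er0: "0 \<le> eps * r" using assms by simp
  have "(1 + eps) * (S0 - 6 * r) \<le> (1 + eps) * NN x" using N1 assms by (intro mult_left_mono) auto
  moreover have "(1 + eps) * (S0 - 6 * r) = S0 - 6 * r + eps * S0 - 6 * (eps * r)" by (simp add: algebra_simps)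
  ultimately have "cS x \<le> (1 + eps) * NN x" using b(1) er er0 assms(5) unfolding abs_le_iff by linarith
  thus "cS x / NN x \<le> 1 + eps" using Npos by (simp add: divide_le_eq)
  have "(1 - eps) * NN x \<le> (1 - eps) * (S0 + 6 * r)" using N1 assms by (intro mult_left_mono) auto
  moreover have "(1 - eps) * (S0 + 6 * r) = S0 + 6 * r - eps * S0 - 6 * (eps * r)" by (simp add: algebra_simps)
  ultimately have "(1 - eps) * NN x \<le> cS x" using b(1) er er0 assms(5) unfolding abs_le_iff by linarith
  thus "1 - eps \<le> cS x / NN x" using Npos by (simp add: le_divide_eq)
  thus "0 \<le> cS x / NN x" using assms by linarith
qed

lemma quot_lip:
  fixes S1 S2 N1 N2 A1 A2 B m :: real
  assumes "m > 0" "m \<le> N1" "m \<le> N2" "\<bar>S2\<bar> \<le> B" "\<bar>N1\<bar> \<le> B" "\<bar>N2\<bar> \<le> B" "\<bar>A1\<bar> \<le> B"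
  shows "\<bar>S1 / N1 * A1 - S2 / N2 * A2\<bar> \<le> (B * B / (m * m)) * (\<bar>S1 - S2\<bar> + \<bar>N1 - N2\<bar> + \<bar>A1 - A2\<bar>)"
proof -
  have N: "N1 > 0" "N2 > 0" using assms by linarith+
  define num where "num = (S1 - S2) * N2 * A1 + S2 * (N2 - N1) * A1 + S2 * N1 * (A1 - A2)"
  have eq: "S1 / N1 * A1 - S2 / N2 * A2 = num / (N1 * N2)"
    using N unfolding num_def by (simp add: field_simps)
  have B0: "B \<ge> 0" using assms by linarith
  have t1: "\<bar>(S1 - S2) * N2 * A1\<bar> \<le> \<bar>S1 - S2\<bar> * (B * B)"
    unfolding abs_mult mult.assoc using assms B0 by (intro mult_left_mono mult_mono) auto
  have t2: "\<bar>S2 * (N2 - N1) * A1\<bar> \<le> \<bar>N1 - N2\<bar> * (B * B)"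
  proof -
    have "\<bar>S2 * (N2 - N1) * A1\<bar> = \<bar>N1 - N2\<bar> * (\<bar>S2\<bar> * \<bar>A1\<bar>)" by (simp add: abs_mult abs_minus_commute)
    also have "\<dots> \<le> \<bar>N1 - N2\<bar> * (B * B)" using assms B0 by (intro mult_left_mono mult_mono) auto
    finally show ?thesis .
  qed
  have t3: "\<bar>S2 * N1 * (A1 - A2)\<bar> \<le> \<bar>A1 - A2\<bar> * (B * B)"
  proof -
    have "\<bar>S2 * N1 * (A1 - A2)\<bar> = \<bar>A1 - A2\<bar> * (\<bar>S2\<bar> * \<bar>N1\<bar>)" by (simp add: abs_mult)
    also have "\<dots> \<le> \<bar>A1 - A2\<bar> * (B * B)" using assms B0 by (intro mult_left_mono mult_mono) auto
    finally show ?thesis .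
  qed
  have nb: "\<bar>num\<bar> \<le> (B * B) * (\<bar>S1 - S2\<bar> + \<bar>N1 - N2\<bar> + \<bar>A1 - A2\<bar>)"
    unfolding num_def using t1 t2 t3 abs_triangle_ineq[of "(S1 - S2) * N2 * A1 + S2 * (N2 - N1) * A1" "S2 * N1 * (A1 - A2)"]
      abs_triangle_ineq[of "(S1 - S2) * N2 * A1" "S2 * (N2 - N1) * A1"]
    by (simp add: algebra_simps)
  have mm: "m * m \<le> N1 * N2" using assms by (intro mult_mono) auto
  have NN0: "0 < N1 * N2" using N by simp
  have m0: "0 < m * m" using assms by simp
  have "\<bar>num / (N1 * N2)\<bar> = \<bar>num\<bar> / (N1 * N2)" using NN0 by (simp add: abs_divide)
  also have "\<dots> \<le> \<bar>num\<bar> / (m * m)" by (rule divide_left_mono[OF mm]) (use NN0 m0 in simp_all)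
  also have "\<dots> \<le> (B * B) * (\<bar>S1 - S2\<bar> + \<bar>N1 - N2\<bar> + \<bar>A1 - A2\<bar>) / (m * m)"
    using nb m0 by (intro divide_right_mono) simp_all
  finally show ?thesis using eq by simp
qed

definition cl :: "real \<Rightarrow> real \<Rightarrow> real \<Rightarrow> real" where
  "cl c r v = max (c - r) (min (c + r) v)"

lemma cl_lip: "\<bar>cl c r v - cl c r w\<bar> \<le> \<bar>v - w\<bar>"
  unfolding cl_def by (auto simp: max_def min_def abs_if)

lemma cl_in: "r \<ge> 0 \<Longrightarrow> \<bar>cl c r v - c\<bar> \<le> r"
  unfolding cl_def by (auto simp: max_def min_def abs_if)

lemma cl_id: assumes "\<bar>v - c\<bar> \<le> r" shows "cl c r v = v"
proof -
  have "c - r \<le> v" "v \<le> c + r" using assms by (auto simp: abs_le_iff)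
  thus ?thesis by (simp add: cl_def min_absorb2 max_absorb2)
qed

definition proj :: "real \<Rightarrow> real \<Rightarrow> state \<Rightarrow> state" where
  "proj S0 r x = (cl S0 r (cS x), cl 0 r (cE x), cl 0 r (cI x), cl 0 r (cR x), cl 0 r (cU x), cl 0 r (cC x))"

lemma proj_in: "r \<ge> 0 \<Longrightarrow> inbox S0 r (proj S0 r x)"
  unfolding inbox_def proj_def using cl_in[where r=r and c=0] cl_in[where r=r and c=S0] by simp

lemma proj_id: "inbox S0 r x \<Longrightarrow> proj S0 r x = x"
  unfolding inbox_def proj_def by (subst (5) state_eq) (simp add: cl_id)

lemma proj_lip:
  fixes x y :: state
  shows "\<bar>cS (proj S0 r x) - cS (proj S0 r y)\<bar> \<le> norm (x - y)" "\<bar>cE (proj S0 r x) - cE (proj S0 r y)\<bar> \<le> norm (x - y)"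
    "\<bar>cI (proj S0 r x) - cI (proj S0 r y)\<bar> \<le> norm (x - y)" "\<bar>cR (proj S0 r x) - cR (proj S0 r y)\<bar> \<le> norm (x - y)"
    "\<bar>cU (proj S0 r x) - cU (proj S0 r y)\<bar> \<le> norm (x - y)" "\<bar>cC (proj S0 r x) - cC (proj S0 r y)\<bar> \<le> norm (x - y)"
  unfolding proj_def using comps_le_norm[of x y] cl_lip by (simp_all, (meson order_trans)+)

lemma lin_bd: "c \<ge> 0 \<Longrightarrow> \<bar>u\<bar> \<le> D \<Longrightarrow> - (c * D) \<le> c * u \<and> c * u \<le> c * D" for c u D :: real
proof -
  assume a: "c \<ge> 0" "\<bar>u\<bar> \<le> D"
  have "\<bar>c * u\<bar> \<le> c * D" using a by (simp add: abs_mult mult_left_mono)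
  thus ?thesis by (simp add: abs_le_iff)
qed

context
  fixes Lam beta delta a gamma eta d1 d2 d3 d4 d5 c1 c2 c3 c4 q :: real
  assumes pos: "Lam > 0" "beta > 0" "delta > 0" "a > 0" "gamma > 0" "eta > 0"
    "d1 > 0" "d2 > 0" "d3 > 0" "d4 > 0" "d5 > 0"
    "c1 > 0" "c2 > 0" "c3 > 0" "c4 > 0" "0 \<le> q" "q \<le> 1"
begin

abbreviation "FF \<equiv> seiruc_rhs Lam beta delta a gamma eta d1 d2 d3 d4 d5 c1 c2 c3 c4 q"
abbreviation "S0 \<equiv> Lam / delta"

lemma S0_pos: "S0 > 0" using pos by simp

lemma F_comps:
  "cS (FF x) = Lam - beta * cS x / NN x * AA x - delta * cS x"
  "cE (FF x) = beta * cS x / NN x * AA x - (a + d1 + c1) * cE x"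
  "cI (FF x) = a * cE x - (gamma + d2 + c2) * cI x"
  "cR (FF x) = gamma * q * cI x - (d3 + c3) * cR x + eta * cU x"
  "cU (FF x) = gamma * (1 - q) * cI x - (d4 + c4 + eta) * cU x"
  "cC (FF x) = c1 * cE x + c2 * cI x + c3 * cR x + c4 * cU x - d5 * cC x"
  by (cases x rule: prod_cases6, simp add: seiruc_rhs_def Let_def NN_def AA_def algebra_simps)+

lemma G_lip:
  assumes r: "0 < r" "20 * r \<le> S0"
  shows "\<exists>L>0. \<forall>x y. norm (FF (proj S0 r x) - FF (proj S0 r y)) \<le> L * norm (x - y)"
proof -
  define K where "K = (2 * S0) * (2 * S0) / ((S0 / 2) * (S0 / 2))"
  have K0: "K \<ge> 0" unfolding K_def by simp
  define L where "L = 2 * (beta * (K * 10)) + delta + (a + d1 + c1) + a + (gamma + d2 + c2)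
    + gamma * q + (d3 + c3) + eta + gamma * (1 - q) + (d4 + c4 + eta) + c1 + c2 + c3 + c4 + d5 + 1"
  have L0: "L > 0" unfolding L_def using pos K0 by (simp add: add_pos_nonneg)
  have "norm (FF (proj S0 r x) - FF (proj S0 r y)) \<le> L * norm (x - y)" for x y
  proof -
    define p where "p = proj S0 r x"
    define p' where "p' = proj S0 r y"
    define D where "D = norm (x - y)"
    have ib: "inbox S0 r p" "inbox S0 r p'" unfolding p_def p'_def using proj_in r by auto
    note bb = box_bounds[OF S0_pos zero_less_one order_refl r(1) _ ib(1)]
      box_bounds[OF S0_pos zero_less_one order_refl r(1) _ ib(2)]
    have bb': "NN p \<ge> S0 / 2" "NN p' \<ge> S0 / 2" "\<bar>cS p'\<bar> \<le> 2 * S0" "\<bar>NN p\<bar> \<le> 2 * S0" "\<bar>NN p'\<bar> \<le> 2 * S0" "\<bar>AA p\<bar> \<le> 2 * S0"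
      using bb r by auto
    have dc: "\<bar>cS p - cS p'\<bar> \<le> D" "\<bar>cE p - cE p'\<bar> \<le> D" "\<bar>cI p - cI p'\<bar> \<le> D"
      "\<bar>cR p - cR p'\<bar> \<le> D" "\<bar>cU p - cU p'\<bar> \<le> D" "\<bar>cC p - cC p'\<bar> \<le> D"
      unfolding p_def p'_def D_def by (rule proj_lip)+
    have dN: "\<bar>NN p - NN p'\<bar> \<le> 6 * D" using dc unfolding NN_def abs_le_iff by linarith
    have dA: "\<bar>AA p - AA p'\<bar> \<le> 3 * D" using dc unfolding AA_def abs_le_iff by linarith
    have q1: "\<bar>cS p / NN p * AA p - cS p' / NN p' * AA p'\<bar> \<le> K * (\<bar>cS p - cS p'\<bar> + \<bar>NN p - NN p'\<bar> + \<bar>AA p - AA p'\<bar>)"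
      unfolding K_def by (rule quot_lip) (use bb' S0_pos in auto)
    also have "\<dots> \<le> K * (10 * D)" using dc dN dA K0 by (intro mult_left_mono) auto
    finally have q2: "\<bar>cS p / NN p * AA p - cS p' / NN p' * AA p'\<bar> \<le> K * (10 * D)" .
    define fd where "fd = beta * cS p / NN p * AA p - beta * cS p' / NN p' * AA p'"
    have "fd = beta * (cS p / NN p * AA p - cS p' / NN p' * AA p')" unfolding fd_def by (simp add: algebra_simps)
    hence fdb: "\<bar>fd\<bar> \<le> beta * (K * 10 * D)" using q2 pos by (simp add: abs_mult mult_left_mono)
    have dS: "cS (FF p) - cS (FF p') = - fd - delta * (cS p - cS p')"
      unfolding F_comps fd_def by (simp add: algebra_simps)
    have dE: "cE (FF p) - cE (FF p') = fd - (a + d1 + c1) * (cE p - cE p')"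
      unfolding F_comps fd_def by (simp add: algebra_simps)
    have dI: "cI (FF p) - cI (FF p') = a * (cE p - cE p') - (gamma + d2 + c2) * (cI p - cI p')"
      unfolding F_comps by (simp add: algebra_simps)
    have dR: "cR (FF p) - cR (FF p') = gamma * q * (cI p - cI p') - (d3 + c3) * (cR p - cR p') + eta * (cU p - cU p')"
      unfolding F_comps by (simp add: algebra_simps)
    have dU: "cU (FF p) - cU (FF p') = gamma * (1 - q) * (cI p - cI p') - (d4 + c4 + eta) * (cU p - cU p')"
      unfolding F_comps by (simp add: algebra_simps)
    have dC: "cC (FF p) - cC (FF p') = c1 * (cE p - cE p') + c2 * (cI p - cI p') + c3 * (cR p - cR p') + c4 * (cU p - cU p') - d5 * (cC p - cC p')"
      unfolding F_comps by (simp add: algebra_simps)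
    have l1: "- (delta * D) \<le> delta * (cS p - cS p') \<and> delta * (cS p - cS p') \<le> delta * D"
      using pos dc by (intro lin_bd) auto
    have l2: "- ((a + d1 + c1) * D) \<le> (a + d1 + c1) * (cE p - cE p') \<and> (a + d1 + c1) * (cE p - cE p') \<le> (a + d1 + c1) * D"
      using pos dc by (intro lin_bd) auto
    have l3: "- (a * D) \<le> a * (cE p - cE p') \<and> a * (cE p - cE p') \<le> a * D"
      using pos dc by (intro lin_bd) auto
    have l4: "- ((gamma + d2 + c2) * D) \<le> (gamma + d2 + c2) * (cI p - cI p') \<and> (gamma + d2 + c2) * (cI p - cI p') \<le> (gamma + d2 + c2) * D"
      using pos dc by (intro lin_bd) auto
    have l5: "- (gamma * q * D) \<le> gamma * q * (cI p - cI p') \<and> gamma * q * (cI p - cI p') \<le> gamma * q * D"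
      using pos dc by (intro lin_bd) auto
    have l6: "- ((d3 + c3) * D) \<le> (d3 + c3) * (cR p - cR p') \<and> (d3 + c3) * (cR p - cR p') \<le> (d3 + c3) * D"
      using pos dc by (intro lin_bd) auto
    have l7: "- (eta * D) \<le> eta * (cU p - cU p') \<and> eta * (cU p - cU p') \<le> eta * D"
      using pos dc by (intro lin_bd) auto
    have l8: "- (gamma * (1 - q) * D) \<le> gamma * (1 - q) * (cI p - cI p') \<and> gamma * (1 - q) * (cI p - cI p') \<le> gamma * (1 - q) * D"
      using pos dc by (intro lin_bd) auto
    have l9: "- ((d4 + c4 + eta) * D) \<le> (d4 + c4 + eta) * (cU p - cU p') \<and> (d4 + c4 + eta) * (cU p - cU p') \<le> (d4 + c4 + eta) * D"
      using pos dc by (intro lin_bd) auto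
    have l10: "- (c1 * D) \<le> c1 * (cE p - cE p') \<and> c1 * (cE p - cE p') \<le> c1 * D"
      using pos dc by (intro lin_bd) auto
    have l11: "- (c2 * D) \<le> c2 * (cI p - cI p') \<and> c2 * (cI p - cI p') \<le> c2 * D"
      using pos dc by (intro lin_bd) auto
    have l12: "- (c3 * D) \<le> c3 * (cR p - cR p') \<and> c3 * (cR p - cR p') \<le> c3 * D"
      using pos dc by (intro lin_bd) auto
    have l13: "- (c4 * D) \<le> c4 * (cU p - cU p') \<and> c4 * (cU p - cU p') \<le> c4 * D"
      using pos dc by (intro lin_bd) auto
    have l14: "- (d5 * D) \<le> d5 * (cC p - cC p') \<and> d5 * (cC p - cC p') \<le> d5 * D"
      using pos dc by (intro lin_bd) auto
    have "norm (FF p - FF p') \<le> \<bar>cS (FF p) - cS (FF p')\<bar> + \<bar>cE (FF p) - cE (FF p')\<bar> + \<bar>cI (FF p) - cI (FF p')\<bar>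
        + \<bar>cR (FF p) - cR (FF p')\<bar> + \<bar>cU (FF p) - cU (FF p')\<bar> + \<bar>cC (FF p) - cC (FF p')\<bar>"
      by (rule norm_le_comps)
    also have "\<dots> \<le> 2 * (beta * (K * 10 * D)) + delta * D + (a + d1 + c1) * D + a * D + (gamma + d2 + c2) * D
      + gamma * q * D + (d3 + c3) * D + eta * D + gamma * (1 - q) * D + (d4 + c4 + eta) * D
      + c1 * D + c2 * D + c3 * D + c4 * D + d5 * D"
      using dS dE dI dR dU dC l1 l2 l3 l4 l5 l6 l7 l8 l9 l10 l11 l12 l13 l14 fdb
      unfolding abs_le_iff by linarith
    also have "\<dots> \<le> L * D" unfolding L_def using D_def by (simp add: algebra_simps)
    finally show ?thesis unfolding p_def p'_def D_def .
  qed
  thus ?thesis using L0 by blast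
qed

end

lemma mid1: "p < r \<Longrightarrow> p < (p + r) / 2" for p r :: real by simp
lemma mid2: "p < r \<Longrightarrow> (p + r) / 2 < r" for p r :: real by simp

lemma pick_small:
  assumes "eventually P (at_right (0::real))"
  shows "\<exists>k>0. P k"
proof -
  obtain b where "b > 0" "\<forall>y>0. y < b \<longrightarrow> P y" using assms unfolding eventually_at_right_field by auto
  thus ?thesis by (intro exI[of _ "b/2"]) auto
qed

lemma ev_less: "c > 0 \<Longrightarrow> eventually (\<lambda>k. k < c) (at_right (0::real))"
  unfolding eventually_at_right_field by auto

lemma isCont_right: "isCont f (0::real) \<Longrightarrow> (f \<longlongrightarrow> f 0) (at_right 0)"
  unfolding isCont_def by (rule tendsto_mono[OF at_le]) auto

lemma P_gen:
  fixes g q eta tc td :: real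
  assumes "tc > 0" "td > 0"
  shows "1 + g * (1 - q) / td + (g * q + eta * (g * (1 - q) / td)) / tc
    = (g * (1 - q) * (eta + tc) + td * (tc + q * g)) / (tc * td)"
proof -
  have "(1 + g * (1 - q) / td + (g * q + eta * (g * (1 - q) / td)) / tc) * (tc * td)
     = g * (1 - q) * (eta + tc) + td * (tc + q * g)"
    using assms by (simp add: field_simps)
  thus ?thesis using assms by (simp add: eq_divide_eq)
qed

context
  fixes Lam beta delta a gamma eta d1 d2 d3 d4 d5 c1 c2 c3 c4 q :: real
  assumes pos: "Lam > 0" "beta > 0" "delta > 0" "a > 0" "gamma > 0" "eta > 0"
    "d1 > 0" "d2 > 0" "d3 > 0" "d4 > 0" "d5 > 0"
    "c1 > 0" "c2 > 0" "c3 > 0" "c4 > 0" "0 \<le> q" "q \<le> 1"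
begin

lemma R0_eq:
  defines "P \<equiv> gamma * (1 - q) * (eta + (d3 + c3)) + (d4 + c4 + eta) * ((d3 + c3) + q * gamma)"
  shows "seiruc_R0 Lam beta delta a gamma eta d1 d2 d3 d4 c1 c2 c3 c4 q
     = a * beta * P / ((a + d1 + c1) * (gamma + d2 + c2) * (d3 + c3) * (d4 + c4 + eta))"
proof -
  define X where "X = (a + d1 + c1) * (gamma + d2 + c2) * (d3 + c3) * (d4 + c4 + eta)"
  have t: "X > 0" using pos unfolding X_def by simp
  have e: "Lam / delta * delta * (a + d1 + c1) * (gamma + d2 + c2) * (d3 + c3) * (d4 + c4 + eta) = Lam * X"
    using pos unfolding X_def by (simp add: mult.assoc)
  have "seiruc_R0 Lam beta delta a gamma eta d1 d2 d3 d4 c1 c2 c3 c4 q = a * beta * Lam * P / (Lam * X)"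
    unfolding seiruc_R0_def Let_def P_def e ..
  also have "\<dots> = a * beta * P / X" using pos t by simp
  finally show ?thesis unfolding X_def .
qed

lemma stab_weights:
  assumes R0: "seiruc_R0 Lam beta delta a gamma eta d1 d2 d3 d4 c1 c2 c3 c4 q < 1"
  shows "\<exists>k vE vU vR wS wC. 0 < k \<and> k \<le> 1 \<and> vE > 0 \<and> vU > 0 \<and> vR > 0 \<and> wS > 0 \<and> wC > 0 \<and>
    beta * (1 + k) * (1 + vU + vR) < ((a + d1 + c1) - k) * vE \<and>
    a * vE < ((gamma + d2 + c2) - k) * 1 \<and>
    gamma * q * 1 + eta * vU < ((d3 + c3) - k) * vR \<and>
    gamma * (1 - q) * 1 < ((d4 + c4 + eta) - k) * vU \<and>
    beta * (1 + k) * (1 + vU + vR) < (delta - k) * wS \<and>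
    c1 * vE + c2 * 1 + c3 * vR + c4 * vU < (d5 - k) * wC"
proof -
  define th1 where "th1 = a + d1 + c1"
  define th2 where "th2 = gamma + d2 + c2"
  define th3 where "th3 = d3 + c3"
  define th4 where "th4 = d4 + c4 + eta"
  have th: "th1 > 0" "th2 > 0" "th3 > 0" "th4 > 0" using pos unfolding th1_def th2_def th3_def th4_def by auto
  define P where "P = gamma * (1 - q) * (eta + th3) + th4 * (th3 + q * gamma)"
  have "th3 + q * gamma > 0" using th pos by (intro add_pos_nonneg) auto
  hence P0: "P > 0" unfolding P_def using pos th by (intro add_nonneg_pos) auto
  have "a * beta * P / (th1 * th2 * th3 * th4) < 1" using R0 R0_eq unfolding P_def th1_def th2_def th3_def th4_def by simp
  hence RP: "a * beta * P < th1 * th2 * th3 * th4" using th by (simp add: divide_less_eq)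
  define vU where "vU k = (gamma * (1 - q) + k) / (th4 - k)" for k
  define vR where "vR k = (gamma * q + eta * vU k + k) / (th3 - k)" for k
  define vE where "vE k = (th2 - 2 * k) / a" for k
  define phi where "phi k = (th1 - k) * vE k - beta * (1 + k) * (1 + vU k + vR k)" for k
  have "1 + vU 0 + vR 0 = P / (th3 * th4)"
    unfolding vU_def vR_def P_def using P_gen[where g=gamma and q=q and eta=eta and tc=th3 and td=th4] th by simp
  hence "phi 0 = th1 * th2 / a - beta * P / (th3 * th4)" unfolding phi_def vE_def by simp
  also have "\<dots> = (th1 * th2 * th3 * th4 - a * beta * P) / (a * th3 * th4)"
    using th pos by (simp add: field_simps)
  also have "\<dots> > 0" using RP th pos by (intro divide_pos_pos) simp_all
  finally have phi0: "phi 0 > 0" .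
  have "isCont phi 0" unfolding phi_def vE_def vR_def vU_def
    apply (intro continuous_intros) using th pos by simp_all
  hence "eventually (\<lambda>k. phi k > 0) (at_right 0)"
    using phi0 by (intro order_tendstoD(1)[OF isCont_right]) auto
  moreover have "eventually (\<lambda>k. k < min (min 1 (th2 / 2)) (min (min th3 th4) (min delta d5))) (at_right 0)"
    using th pos by (intro ev_less) auto
  ultimately obtain k where k: "k > 0" "phi k > 0" "k < min (min 1 (th2 / 2)) (min (min th3 th4) (min delta d5))"
    using pick_small[OF eventually_conj] by blast
  have kk: "k < 1" "k < th2 / 2" "k < th3" "k < th4" "k < delta" "k < d5" using k(3) by auto
  have vU0: "vU k > 0" unfolding vU_def using kk k pos by (intro divide_pos_pos add_nonneg_pos) auto
  have vR0: "vR k > 0" unfolding vR_def using kk k pos vU0 by (intro divide_pos_pos add_nonneg_pos) auto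
  have vE0: "vE k > 0" unfolding vE_def using kk pos by simp
  define wS where "wS = (beta * (1 + k) * (1 + vU k + vR k) + 1) / (delta - k)"
  define wC where "wC = (c1 * vE k + c2 * 1 + c3 * vR k + c4 * vU k + 1) / (d5 - k)"
  have B0: "beta * (1 + k) * (1 + vU k + vR k) \<ge> 0" using pos k vU0 vR0 by simp
  have wS0: "wS > 0" unfolding wS_def using kk B0 by (intro divide_pos_pos) auto
  have wC0: "wC > 0" unfolding wC_def using kk pos vE0 vR0 vU0 by (intro divide_pos_pos) (auto intro!: add_pos_pos)
  have c5: "beta * (1 + k) * (1 + vU k + vR k) < (delta - k) * wS" unfolding wS_def using kk by simp
  have c6: "c1 * vE k + c2 * 1 + c3 * vR k + c4 * vU k < (d5 - k) * wC" unfolding wC_def using kk by simp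
  have c1': "beta * (1 + k) * (1 + vU k + vR k) < (th1 - k) * vE k" using k(2) unfolding phi_def by simp
  have c2': "a * vE k < (th2 - k) * 1" unfolding vE_def using pos k by simp
  have c3': "gamma * q * 1 + eta * vU k < (th3 - k) * vR k" unfolding vR_def using kk k by simp
  have c4': "gamma * (1 - q) * 1 < (th4 - k) * vU k" unfolding vU_def using kk k by simp
  have "0 < k \<and> k \<le> 1 \<and> vE k > 0 \<and> vU k > 0 \<and> vR k > 0 \<and> wS > 0 \<and> wC > 0 \<and>
    beta * (1 + k) * (1 + vU k + vR k) < (th1 - k) * vE k \<and>
    a * vE k < (th2 - k) * 1 \<and>
    gamma * q * 1 + eta * vU k < (th3 - k) * vR k \<and>
    gamma * (1 - q) * 1 < (th4 - k) * vU k \<and>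
    beta * (1 + k) * (1 + vU k + vR k) < (delta - k) * wS \<and>
    c1 * vE k + c2 * 1 + c3 * vR k + c4 * vU k < (d5 - k) * wC"
    using k kk vE0 vU0 vR0 wS0 wC0 c1' c2' c3' c4' c5 c6 by simp
  note fin = this[unfolded th1_def th2_def th3_def th4_def]
  show ?thesis by (rule exI[where x=k], rule exI[where x="vE k"], rule exI[where x="vU k"], rule exI[where x="vR k"],
    rule exI[where x=wS], rule exI[where x=wC]) (rule fin)
qed

lemma inst_weights:
  assumes R0: "seiruc_R0 Lam beta delta a gamma eta d1 d2 d3 d4 c1 c2 c3 c4 q > 1"
  shows "\<exists>k vE vU vR. 0 < k \<and> k \<le> 1 \<and> vU \<ge> 0 \<and> vR \<ge> 0 \<and>
    vU = gamma * (1 - q) / ((d4 + c4 + eta) + k) \<and>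
    vR = (gamma * q + eta * vU) / ((d3 + c3) + k) \<and>
    a * vE > (gamma + d2 + c2) + k \<and>
    beta * (1 - k) * (1 + vR + vU) > ((a + d1 + c1) + k) * vE"
proof -
  define th1 where "th1 = a + d1 + c1"
  define th2 where "th2 = gamma + d2 + c2"
  define th3 where "th3 = d3 + c3"
  define th4 where "th4 = d4 + c4 + eta"
  have th: "th1 > 0" "th2 > 0" "th3 > 0" "th4 > 0" using pos unfolding th1_def th2_def th3_def th4_def by auto
  define P where "P = gamma * (1 - q) * (eta + th3) + th4 * (th3 + q * gamma)"
  have "a * beta * P / (th1 * th2 * th3 * th4) > 1" using R0 R0_eq unfolding P_def th1_def th2_def th3_def th4_def by simp
  hence RP: "a * beta * P > th1 * th2 * th3 * th4" using th by (simp add: less_divide_eq)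
  define vU where "vU k = gamma * (1 - q) / (th4 + k)" for k
  define vR where "vR k = (gamma * q + eta * vU k) / (th3 + k)" for k
  define psi where "psi k = beta * (1 - k) * (1 + vR k + vU k) * a - (th1 + k) * (th2 + k)" for k
  have "1 + vU 0 + vR 0 = P / (th3 * th4)"
    unfolding vU_def vR_def P_def using P_gen[where g=gamma and q=q and eta=eta and tc=th3 and td=th4] th by simp
  hence "psi 0 = beta * (P / (th3 * th4)) * a - th1 * th2" unfolding psi_def by (simp add: algebra_simps)
  also have "\<dots> = (a * beta * P - th1 * th2 * th3 * th4) / (th3 * th4)"
    using th pos by (simp add: field_simps)
  also have "\<dots> > 0" using RP th pos by (intro divide_pos_pos) simp_all
  finally have psi0: "psi 0 > 0" .
  have "isCont psi 0" unfolding psi_def vR_def vU_def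
    apply (intro continuous_intros) using th pos by simp_all
  hence "eventually (\<lambda>k. psi k > 0) (at_right 0)"
    using psi0 by (intro order_tendstoD(1)[OF isCont_right]) auto
  moreover have "eventually (\<lambda>k. k < 1) (at_right (0::real))" by (intro ev_less) auto
  ultimately obtain k where k: "k > 0" "psi k > 0" "k < 1"
    using pick_small[OF eventually_conj] by blast
  have vU0: "vU k \<ge> 0" unfolding vU_def using k pos th by simp
  have vR0: "vR k \<ge> 0" unfolding vR_def using k pos th vU0 by simp
  define X where "X = beta * (1 - k) * (1 + vR k + vU k)"
  have X: "X * a > (th1 + k) * (th2 + k)" using k(2) unfolding psi_def X_def by simp
  define vE where "vE = ((th2 + k) / a + X / (th1 + k)) / 2"
  have t1: "(th2 + k) / a < X / (th1 + k)" using X th pos k by (simp add: field_simps)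
  have "a * vE > th2 + k"
  proof -
    have "(th2 + k) / a < vE" unfolding vE_def using t1 by (rule mid1)
    hence "th2 + k < vE * a" using pos(4) by (simp add: pos_divide_less_eq)
    thus ?thesis by (simp add: mult.commute)
  qed
  moreover have "(th1 + k) * vE < X"
  proof -
    have "vE < X / (th1 + k)" unfolding vE_def using t1 by (rule mid2)
    moreover have "th1 + k > 0" using th k by simp
    ultimately have "vE * (th1 + k) < X" by (simp add: pos_less_divide_eq)
    thus ?thesis by (simp add: mult.commute)
  qed
  ultimately have "0 < k \<and> k \<le> 1 \<and> vU k \<ge> 0 \<and> vR k \<ge> 0 \<and>
    vU k = gamma * (1 - q) / (th4 + k) \<and>
    vR k = (gamma * q + eta * vU k) / (th3 + k) \<and>
    a * vE > th2 + k \<and>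
    beta * (1 - k) * (1 + vR k + vU k) > (th1 + k) * vE"
    using k vU0 vR0 unfolding X_def by (simp add: vU_def vR_def)
  note fin = this[unfolded th1_def th2_def th3_def th4_def]
  show ?thesis by (rule exI[where x=k], rule exI[where x=vE], rule exI[where x="vU k"], rule exI[where x="vR k"]) (rule fin)
qed

end

context
  fixes Lam beta delta a gamma eta d1 d2 d3 d4 d5 c1 c2 c3 c4 q :: real
  assumes pos: "Lam > 0" "beta > 0" "delta > 0" "a > 0" "gamma > 0" "eta > 0"
    "d1 > 0" "d2 > 0" "d3 > 0" "d4 > 0" "d5 > 0"
    "c1 > 0" "c2 > 0" "c3 > 0" "c4 > 0" "0 \<le> q" "q \<le> 1"
begin

abbreviation "FX \<equiv> seiruc_rhs Lam beta delta a gamma eta d1 d2 d3 d4 d5 c1 c2 c3 c4 q"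
abbreviation "SX \<equiv> Lam / delta"

lemma F_S': "cS (FX y) = - delta * (cS y - SX) - beta * (cS y / NN y) * AA y"
proof -
  have "delta * SX = Lam" using pos by simp
  thus ?thesis using F_comps[OF pos] by (simp add: algebra_simps)
qed

lemma F_E': "cE (FX y) = beta * (cS y / NN y) * AA y - (a + d1 + c1) * cE y"
  using F_comps[OF pos] by simp

lemma decay:
  fixes H :: "state \<Rightarrow> state" and x :: "real \<Rightarrow> state" and k vE vU vR wS wC r T t :: real
  assumes k: "0 < k" "k \<le> 1" and w: "vE > 0" "vU > 0" "vR > 0" "wS > 0" "wC > 0"
    and W1: "beta * (1 + k) * (1 + vU + vR) < ((a + d1 + c1) - k) * vE"
    and W2: "a * vE < ((gamma + d2 + c2) - k) * 1"
    and W3: "gamma * q * 1 + eta * vU < ((d3 + c3) - k) * vR"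
    and W4: "gamma * (1 - q) * 1 < ((d4 + c4 + eta) - k) * vU"
    and W5: "beta * (1 + k) * (1 + vU + vR) < (delta - k) * wS"
    and W6: "c1 * vE + c2 * 1 + c3 * vR + c4 * vU < (d5 - k) * wC"
    and H: "\<And>y. inbox SX (SX * k / 20) y \<Longrightarrow> H y = FX y"
    and r: "0 < r" "r * wS \<le> SX * k / 20" "r * vE \<le> SX * k / 20" "r * 1 \<le> SX * k / 20"
      "r * vR \<le> SX * k / 20" "r * vU \<le> SX * k / 20" "r * wC \<le> SX * k / 20"
    and sol: "solves_on H x {0..<T}"
    and init: "\<bar>cS (x 0) - SX\<bar> < r * wS" "\<bar>cE (x 0)\<bar> < r * vE" "\<bar>cI (x 0)\<bar> < r * 1"
      "\<bar>cR (x 0)\<bar> < r * vR" "\<bar>cU (x 0)\<bar> < r * vU" "\<bar>cC (x 0)\<bar> < r * wC"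
    and t: "0 \<le> t" "t < T"
  shows "\<bar>cS (x t) - SX\<bar> < r * exp (- k * t) * wS \<and> \<bar>cE (x t)\<bar> < r * exp (- k * t) * vE \<and>
    \<bar>cI (x t)\<bar> < r * exp (- k * t) * 1 \<and> \<bar>cR (x t)\<bar> < r * exp (- k * t) * vR \<and>
    \<bar>cU (x t)\<bar> < r * exp (- k * t) * vU \<and> \<bar>cC (x t)\<bar> < r * exp (- k * t) * wC"
proof -
  define rho0 where "rho0 = SX * k / 20"
  define rho where "rho s = r * exp (- k * s)" for s
  have rho_pos: "rho s > 0" for s unfolding rho_def using r by simp
  have rho_le: "rho s \<le> r" if "s \<ge> 0" for s unfolding rho_def using r k that by simp
  have rho_d: "(rho has_real_derivative (- k) * rho s) (at s within X)" for s X
    unfolding rho_def by (auto intro!: derivative_eq_intros simp: algebra_simps)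
  define base :: "((real \<Rightarrow> real) \<times> (state \<Rightarrow> real) \<times> real) set" where
    "base = {(\<lambda>s. cS (x s) - SX, cS, wS), (\<lambda>s. cE (x s), cE, vE), (\<lambda>s. cI (x s), cI, 1),
             (\<lambda>s. cR (x s), cR, vR), (\<lambda>s. cU (x s), cU, vU), (\<lambda>s. cC (x s), cC, wC)}"
  define K where "K = ({1, -1} :: real set) \<times> base"
  define hs where "hs p s = fst p * fst (snd p) s - rho s * snd (snd (snd p))"
    for p :: "real \<times> (real \<Rightarrow> real) \<times> (state \<Rightarrow> real) \<times> real" and s
  have finK: "finite K" unfolding K_def base_def by simp
  have xd: "(x has_vector_derivative H (x s)) (at s within {0..<T})" if "s \<in> {0..<T}" for s
    using sol that unfolding solves_on_def by blast
  have based: "(zf has_real_derivative Zf (H (x s))) (at s within {0..<T})"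
    if "(zf, Zf, ww) \<in> base" "s \<in> {0..<T}" for zf Zf ww s
  proof -
    note cd = comp_deriv[OF xd[OF that(2)]]
    have "((\<lambda>s. cS (x s) - SX) has_real_derivative cS (H (x s))) (at s within {0..<T})"
      using cd(1) by (auto intro!: derivative_eq_intros)
    thus ?thesis using that(1) cd unfolding base_def by auto
  qed
  have hsd: "(hs p has_real_derivative fst p * fst (snd (snd p)) (H (x s)) + k * rho s * snd (snd (snd p))) (at s within {0..<T})"
    if "p \<in> K" "s \<in> {0..<T}" for p s
  proof -
    obtain sg zf Zf ww where p: "p = (sg, zf, Zf, ww)" by (cases p) auto
    have "(zf, Zf, ww) \<in> base" using that(1) p unfolding K_def by auto
    from based[OF this that(2)] rho_d[of s "{0..<T}"]
    show ?thesis unfolding hs_def p by (auto intro!: derivative_eq_intros simp: algebra_simps)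
  qed
  have "\<forall>p\<in>K. hs p t < 0"
  proof (rule barrier[OF finK _ _ _ t])
    fix p s assume "p \<in> K" "0 \<le> s" "s < T"
    hence "s \<in> {0..<T}" by simp
    from DERIV_continuous[OF hsd[OF \<open>p \<in> K\<close> this]]
    show "continuous (at s within {0..<T}) (hs p)" .
  next
    fix p assume "p \<in> K"
    thus "hs p 0 < 0" using init unfolding K_def base_def hs_def rho_def by (auto simp: abs_less_iff)
  next
    fix p s assume pK: "p \<in> K" and s: "0 < s" "s < T" and all: "\<forall>j\<in>K. hs j s \<le> 0" and hz: "hs p s = 0"
    have sT: "s \<in> {0..<T}" using s by simp
    have "at s within {0..<T} = at s" using s by (intro at_within_interior) auto
    hence hd: "(hs p has_real_derivative fst p * fst (snd (snd p)) (H (x s)) + k * rho s * snd (snd (snd p))) (at s)"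
      using hsd[OF pK sT] by simp
    let ?y = "x s"
    have bd: "\<bar>cS ?y - SX\<bar> \<le> rho s * wS" "\<bar>cE ?y\<bar> \<le> rho s * vE" "\<bar>cI ?y\<bar> \<le> rho s * 1"
      "\<bar>cR ?y\<bar> \<le> rho s * vR" "\<bar>cU ?y\<bar> \<le> rho s * vU" "\<bar>cC ?y\<bar> \<le> rho s * wC"
      using all unfolding K_def base_def hs_def by (auto simp: abs_le_iff)
    have rs: "rho s \<le> r" using rho_le s by simp
    have "rho s * wS \<le> rho0" "rho s * vE \<le> rho0" "rho s * 1 \<le> rho0" "rho s * vR \<le> rho0" "rho s * vU \<le> rho0" "rho s * wC \<le> rho0"
      using r w rs unfolding rho0_def by (meson order_trans mult_right_mono less_imp_le zero_le_one)+
    hence ib: "inbox SX rho0 ?y" using bd unfolding inbox_def by linarith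
    hence Hy: "H ?y = FX ?y" using H unfolding rho0_def by simp
    have rho0a: "0 < rho0" unfolding rho0_def using k pos by simp
    have rho0b: "20 * rho0 = k * SX" unfolding rho0_def by simp
    have rho0: "0 < rho0" "20 * rho0 \<le> k * SX" using rho0a rho0b by auto
    note bb = box_bounds[OF S0_pos[OF pos, simplified] k(1) k(2) rho0(1) rho0(2) ib]
    have A: "\<bar>AA ?y\<bar> \<le> rho s * (1 + vU + vR)" using bd unfolding AA_def abs_le_iff by (simp add: algebra_simps)
    obtain sg zf Zf ww where p: "p = (sg, zf, Zf, ww)" by (cases p) auto
    have sg: "sg = 1 \<or> sg = -1" and zb: "(zf, Zf, ww) \<in> base" using pK p unfolding K_def by auto
    have zeq: "zf s = sg * rho s * ww" using hz sg unfolding hs_def p by auto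
    have key: "sg * Zf (FX ?y) < - k * rho s * ww"
    proof -
      consider "zf = (\<lambda>s. cS (x s) - SX) \<and> Zf = cS \<and> ww = wS" | "zf = (\<lambda>s. cE (x s)) \<and> Zf = cE \<and> ww = vE"
        | "zf = (\<lambda>s. cI (x s)) \<and> Zf = cI \<and> ww = 1" | "zf = (\<lambda>s. cR (x s)) \<and> Zf = cR \<and> ww = vR"
        | "zf = (\<lambda>s. cU (x s)) \<and> Zf = cU \<and> ww = vU" | "zf = (\<lambda>s. cC (x s)) \<and> Zf = cC \<and> ww = wC"
        using zb unfolding base_def by auto
      thus ?thesis
      proof cases
        case 1
        hence z1: "cS (x s) - SX = sg * rho s * wS" using zeq by simp
        have "sg * (- delta * (cS (x s) - SX) - beta * (cS (x s) / NN (x s)) * AA (x s)) < - k * rho s * wS"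
          by (rule stab_S[OF sg rho_pos pos(2) bb(8) bb(6) A W5 z1])
        thus ?thesis using 1 F_S' by simp
      next
        case 2
        hence z1: "cE (x s) = sg * rho s * vE" using zeq by simp
        have "sg * (beta * (cS (x s) / NN (x s)) * AA (x s) - (a + d1 + c1) * cE (x s)) < - k * rho s * vE"
          by (rule stab_E[OF sg rho_pos pos(2) bb(8) bb(6) A W1 z1])
        thus ?thesis using 2 F_E' by simp
      next
        case 3
        hence z1: "cI (x s) = sg * rho s * 1" using zeq by simp
        have "sg * (a * cE (x s) - (gamma + d2 + c2) * cI (x s)) < - k * rho s * 1"
          by (rule stab_I[OF sg rho_pos pos(4) bd(2) W2 z1])
        thus ?thesis using 3 F_comps[OF pos] by simp
      next
        case 4
        have gq: "gamma * q \<ge> 0" using pos by simp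
        have z1: "cR (x s) = sg * rho s * vR" using 4 zeq by simp
        have "sg * (gamma * q * cI (x s) - (d3 + c3) * cR (x s) + eta * cU (x s)) < - k * rho s * vR"
          by (rule stab_R[OF sg rho_pos gq pos(6) bd(3) bd(5) W3 z1])
        thus ?thesis using 4 F_comps[OF pos] by simp
      next
        case 5
        have gq: "gamma * (1 - q) \<ge> 0" using pos by simp
        have z1: "cU (x s) = sg * rho s * vU" using 5 zeq by simp
        have "sg * (gamma * (1 - q) * cI (x s) - (d4 + c4 + eta) * cU (x s)) < - k * rho s * vU"
          by (rule stab_U[OF sg rho_pos gq bd(3) W4 z1])
        thus ?thesis using 5 F_comps[OF pos] by simp
      next
        case 6
        hence z1: "cC (x s) = sg * rho s * wC" using zeq by simp
        have "sg * (c1 * cE (x s) + c2 * cI (x s) + c3 * cR (x s) + c4 * cU (x s) - d5 * cC (x s)) < - k * rho s * wC"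
          by (rule stab_C[OF sg rho_pos pos(12-15) bd(2-5) W6 z1])
        thus ?thesis using 6 F_comps[OF pos] by simp
      qed
    qed
    show "\<exists>d<0. (hs p has_real_derivative d) (at s)"
      using hd key Hy unfolding p by (intro exI[of _ "sg * Zf (FX ?y) + k * rho s * ww"]) auto
  qed
  thus ?thesis unfolding K_def base_def hs_def rho_def by (auto simp: abs_less_iff)
qed


lemma growth:
  fixes H :: "state \<Rightarrow> state" and x :: "real \<Rightarrow> state" and k vE vU vR r T t :: real
  assumes k: "0 < k" "k \<le> 1" and w: "vU \<ge> 0" "vR \<ge> 0"
    and WU: "vU = gamma * (1 - q) / ((d4 + c4 + eta) + k)"
    and WR: "vR = (gamma * q + eta * vU) / ((d3 + c3) + k)"
    and WI: "a * vE > (gamma + d2 + c2) + k"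
    and WE: "beta * (1 - k) * (1 + vR + vU) > ((a + d1 + c1) + k) * vE"
    and H: "\<And>y. inbox SX (SX * k / 20) y \<Longrightarrow> H y = FX y"
    and r: "0 < r"
    and sol: "solves_on H x {0..<T}"
    and inside: "\<And>s. s \<in> {0..<T} \<Longrightarrow> inbox SX (SX * k / 20) (x s)"
    and init: "cE (x 0) > r * vE" "cI (x 0) > r * 1" "cR (x 0) > r * vR" "cU (x 0) > r * vU + r"
    and t: "0 \<le> t" "t < T"
  shows "cI (x t) > r * exp (k * t) * 1"
proof -
  define rho0 where "rho0 = SX * k / 20"
  define th4 where "th4 = d4 + c4 + eta"
  define rho where "rho s = r * exp (k * s)" for s
  define mu where "mu s = r * exp (- (th4 + 1) * s)" for s
  have rho_pos: "rho s > 0" for s unfolding rho_def using r by simp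
  have mu_pos: "mu s > 0" for s unfolding mu_def using r by simp
  have rho_d: "(rho has_real_derivative k * rho s) (at s within X)" for s X
    unfolding rho_def by (auto intro!: derivative_eq_intros simp: algebra_simps)
  have mu_d: "(mu has_real_derivative - (th4 + 1) * mu s) (at s within X)" for s X
    unfolding mu_def by (auto intro!: derivative_eq_intros simp: algebra_simps)
  define K :: "((real \<Rightarrow> real) \<times> (state \<Rightarrow> real) \<times> (real \<Rightarrow> real) \<times> (real \<Rightarrow> real)) set" where
    "K = {(\<lambda>s. cE (x s), cE, \<lambda>s. rho s * vE, \<lambda>s. k * rho s * vE),
          (\<lambda>s. cI (x s), cI, \<lambda>s. rho s * 1, \<lambda>s. k * rho s * 1),
          (\<lambda>s. cR (x s), cR, \<lambda>s. rho s * vR, \<lambda>s. k * rho s * vR),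
          (\<lambda>s. cU (x s), cU, \<lambda>s. rho s * vU + mu s, \<lambda>s. k * rho s * vU - (th4 + 1) * mu s)}"
  define hs where "hs p s = fst (snd (snd p)) s - fst p s"
    for p :: "(real \<Rightarrow> real) \<times> (state \<Rightarrow> real) \<times> (real \<Rightarrow> real) \<times> (real \<Rightarrow> real)" and s
  have finK: "finite K" unfolding K_def by simp
  have xd: "(x has_vector_derivative H (x s)) (at s within {0..<T})" if "s \<in> {0..<T}" for s
    using sol that unfolding solves_on_def by blast
  have Kd: "(zf has_real_derivative Zf (H (x s))) (at s within {0..<T}) \<and> (Lf has_real_derivative Lf' s) (at s within {0..<T})"
    if "(zf, Zf, Lf, Lf') \<in> K" "s \<in> {0..<T}" for zf Zf Lf Lf' s
  proof -
    note cd = comp_deriv[OF xd[OF that(2)]]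
    have "((\<lambda>s. rho s * vE) has_real_derivative k * rho s * vE) (at s within {0..<T})"
      "((\<lambda>s. rho s * 1) has_real_derivative k * rho s * 1) (at s within {0..<T})"
      "((\<lambda>s. rho s * vR) has_real_derivative k * rho s * vR) (at s within {0..<T})"
      "((\<lambda>s. rho s * vU + mu s) has_real_derivative k * rho s * vU - (th4 + 1) * mu s) (at s within {0..<T})"
      using rho_d[of s "{0..<T}"] mu_d[of s "{0..<T}"] by (auto intro!: derivative_eq_intros simp: algebra_simps)
    thus ?thesis using that(1) cd unfolding K_def by auto
  qed
  have hsd: "(hs p has_real_derivative snd (snd (snd p)) s - fst (snd p) (H (x s))) (at s within {0..<T})"
    if "p \<in> K" "s \<in> {0..<T}" for p s
  proof -
    obtain zf Zf Lf Lf' where p: "p = (zf, Zf, Lf, Lf')" by (cases p) auto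
    from Kd[OF that(1)[unfolded p] that(2)]
    show ?thesis unfolding hs_def p by (auto intro!: derivative_eq_intros)
  qed
  have "\<forall>p\<in>K. hs p t < 0"
  proof (rule barrier[OF finK _ _ _ t])
    fix p s assume "p \<in> K" "0 \<le> s" "s < T"
    hence "s \<in> {0..<T}" by simp
    from DERIV_continuous[OF hsd[OF \<open>p \<in> K\<close> this]]
    show "continuous (at s within {0..<T}) (hs p)" .
  next
    fix p assume "p \<in> K"
    thus "hs p 0 < 0" using init unfolding K_def hs_def rho_def mu_def by auto
  next
    fix p s assume pK: "p \<in> K" and s: "0 < s" "s < T" and all: "\<forall>j\<in>K. hs j s \<le> 0" and hz: "hs p s = 0"
    have sT: "s \<in> {0..<T}" using s by simp
    have "at s within {0..<T} = at s" using s by (intro at_within_interior) auto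
    hence hd: "(hs p has_real_derivative snd (snd (snd p)) s - fst (snd p) (H (x s))) (at s)"
      using hsd[OF pK sT] by simp
    let ?y = "x s"
    have bd: "cE ?y \<ge> rho s * vE" "cI ?y \<ge> rho s * 1" "cR ?y \<ge> rho s * vR" "cU ?y \<ge> rho s * vU + mu s"
      using all unfolding K_def hs_def by auto
    have ib: "inbox SX rho0 ?y" using inside[OF sT] unfolding rho0_def .
    hence Hy: "H ?y = FX ?y" using H unfolding rho0_def by simp
    have rho0a: "0 < rho0" unfolding rho0_def using k pos by simp
    have rho0b: "20 * rho0 = k * SX" unfolding rho0_def by simp
    have rho0: "0 < rho0" "20 * rho0 \<le> k * SX" using rho0a rho0b by auto
    note bb = box_bounds[OF S0_pos[OF pos, simplified] k(1) k(2) rho0(1) rho0(2) ib]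
    obtain zf Zf Lf Lf' where p: "p = (zf, Zf, Lf, Lf')" by (cases p) auto
    have zeq: "zf s = Lf s" using hz unfolding hs_def p by auto
    have key: "Zf (FX ?y) > Lf' s"
    proof -
      consider "zf = (\<lambda>s. cE (x s)) \<and> Zf = cE \<and> Lf = (\<lambda>s. rho s * vE) \<and> Lf' = (\<lambda>s. k * rho s * vE)"
        | "zf = (\<lambda>s. cI (x s)) \<and> Zf = cI \<and> Lf = (\<lambda>s. rho s * 1) \<and> Lf' = (\<lambda>s. k * rho s * 1)"
        | "zf = (\<lambda>s. cR (x s)) \<and> Zf = cR \<and> Lf = (\<lambda>s. rho s * vR) \<and> Lf' = (\<lambda>s. k * rho s * vR)"
        | "zf = (\<lambda>s. cU (x s)) \<and> Zf = cU \<and> Lf = (\<lambda>s. rho s * vU + mu s) \<and> Lf' = (\<lambda>s. k * rho s * vU - (th4 + 1) * mu s)"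
        using pK unfolding K_def p by auto
      thus ?thesis
      proof cases
        case 1
        hence z1: "cE (x s) = rho s * vE" using zeq by simp
        have "beta * (cS (x s) / NN (x s)) * (cI (x s) + cU (x s) + cR (x s)) - (a + d1 + c1) * cE (x s) > k * rho s * vE"
          by (rule inst_E[OF rho_pos mu_pos pos(2) k(2) bb(7) bd(2)[simplified] bd(3) bd(4) w(2) w(1) WE z1])
        thus ?thesis using 1 F_E' unfolding AA_def by simp
      next
        case 2
        hence z1: "cI (x s) = rho s" using zeq by simp
        have "a * cE (x s) - (gamma + d2 + c2) * cI (x s) > k * rho s"
          by (rule inst_I[OF rho_pos pos(4) bd(1) WI z1])
        thus ?thesis using 2 F_comps[OF pos] by simp
      next
        case 3
        have gq: "gamma * q \<ge> 0" using pos by simp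
        have t3: "(d3 + c3) + k > 0" using pos k by simp
        have z1: "cR (x s) = rho s * vR" using 3 zeq by simp
        have "gamma * q * cI (x s) - (d3 + c3) * cR (x s) + eta * cU (x s) > k * rho s * vR"
          by (rule inst_R[OF rho_pos mu_pos gq pos(6) bd(2)[simplified] bd(4) t3 WR z1])
        thus ?thesis using 3 F_comps[OF pos] by simp
      next
        case 4
        have gq: "gamma * (1 - q) \<ge> 0" using pos by simp
        have t4: "th4 + k > 0" unfolding th4_def using pos k by simp
        have z1: "cU (x s) = rho s * vU + mu s" using 4 zeq by simp
        have "gamma * (1 - q) * cI (x s) - th4 * cU (x s) > k * rho s * vU - (th4 + 1) * mu s"
          by (rule inst_U[OF rho_pos mu_pos gq bd(2)[simplified] t4 WU[folded th4_def] z1])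
        thus ?thesis using 4 F_comps[OF pos] unfolding th4_def by simp
      qed
    qed
    show "\<exists>d<0. (hs p has_real_derivative d) (at s)"
      using hd key Hy unfolding p by (intro exI[of _ "Lf' s - Zf (FX ?y)"]) auto
  qed
  thus ?thesis unfolding K_def hs_def rho_def by auto
qed

end

lemma exp_neg_lim:
  fixes k :: real
  assumes "k > 0"
  shows "((\<lambda>t. exp (- k * t)) \<longlongrightarrow> 0) at_top"
proof -
  have "filterlim (\<lambda>t. k * t) at_top at_top"
    by (rule filterlim_tendsto_pos_mult_at_top[OF tendsto_const assms filterlim_ident])
  hence "filterlim (\<lambda>t. - k * t) at_bot at_top"
    by (subst filterlim_uminus_at_bot) simp
  thus ?thesis by (rule filterlim_compose[OF exp_at_bot])
qed

lemma sol_subset: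
  assumes "\<forall>t\<in>{0..}. (x has_vector_derivative G (x t)) (at t within {0..})"
    and "\<And>t. 0 \<le> t \<Longrightarrow> t < T \<Longrightarrow> G (x t) = F (x t)"
  shows "solves_on F x {0..<T}"
  unfolding solves_on_def
proof
  fix t assume t: "t \<in> {0..<T}"
  have "(x has_vector_derivative G (x t)) (at t within {0..})" using assms(1) t by auto
  hence "(x has_vector_derivative G (x t)) (at t within {0..<T})"
    by (rule has_vector_derivative_within_subset) auto
  thus "(x has_vector_derivative F (x t)) (at t within {0..<T})" using assms(2) t by simp
qed

context
  fixes Lam beta delta a gamma eta d1 d2 d3 d4 d5 c1 c2 c3 c4 q :: real
  assumes pos: "Lam > 0" "beta > 0" "delta > 0" "a > 0" "gamma > 0" "eta > 0"
    "d1 > 0" "d2 > 0" "d3 > 0" "d4 > 0" "d5 > 0"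
    "c1 > 0" "c2 > 0" "c3 > 0" "c4 > 0" "0 \<le> q" "q \<le> 1"
begin

abbreviation "FY \<equiv> seiruc_rhs Lam beta delta a gamma eta d1 d2 d3 d4 d5 c1 c2 c3 c4 q"
abbreviation "SY \<equiv> Lam / delta"

lemma inbox_of_dist:
  assumes "dist y (SY, 0, 0, 0, 0, 0) \<le> rr"
  shows "inbox SY rr y"
  using dist_e_ge[of y SY] assms unfolding inbox_def by linarith

lemma part1:
  assumes R0: "seiruc_R0 Lam beta delta a gamma eta d1 d2 d3 d4 c1 c2 c3 c4 q < 1"
  shows "loc_asym_stable FY (SY, 0, 0, 0, 0, 0)"
proof -
  obtain k vE vU vR wS wC where k: "0 < k" "k \<le> 1" and w: "vE > 0" "vU > 0" "vR > 0" "wS > 0" "wC > 0"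
    and W1: "beta * (1 + k) * (1 + vU + vR) < ((a + d1 + c1) - k) * vE"
    and W2: "a * vE < ((gamma + d2 + c2) - k) * 1"
    and W3: "gamma * q * 1 + eta * vU < ((d3 + c3) - k) * vR"
    and W4: "gamma * (1 - q) * 1 < ((d4 + c4 + eta) - k) * vU"
    and W5: "beta * (1 + k) * (1 + vU + vR) < (delta - k) * wS"
    and W6: "c1 * vE + c2 * 1 + c3 * vR + c4 * vU < (d5 - k) * wC"
    using stab_weights[OF pos R0] by blast
  define e where "e = (SY, 0::real, 0::real, 0::real, 0::real, 0::real)"
  define rho0 where "rho0 = SY * k / 20"
  have rho0: "rho0 > 0" "20 * rho0 \<le> SY" unfolding rho0_def using k pos by (auto simp: field_simps)
  define Ws where "Ws = wS + vE + 1 + vR + vU + wC"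
  define wm where "wm = min (min (min wS vE) (min 1 vR)) (min vU wC)"
  have Ws: "Ws > 0" unfolding Ws_def using w by simp
  have wm: "wm > 0" "wm \<le> wS" "wm \<le> vE" "wm \<le> 1" "wm \<le> vR" "wm \<le> vU" "wm \<le> wC"
    unfolding wm_def using w by auto
  have est: "dist (x t) e \<le> r * exp (- k * t) * Ws \<and> inbox SY rho0 (x t)"
    if H: "\<And>y. inbox SY rho0 y \<Longrightarrow> H y = FY y" and r: "0 < r" "r * Ws \<le> rho0"
      and sol: "solves_on H x {0..<T}" and x0: "dist (x 0) e < r * wm" and t: "0 \<le> t" "t < T"
    for H x r T t
  proof -
    have rw: "r * wS \<le> rho0" "r * vE \<le> rho0" "r * 1 \<le> rho0" "r * vR \<le> rho0" "r * vU \<le> rho0" "r * wC \<le> rho0"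
    proof -
      have pp: "0 < r * wS" "0 < r * vE" "0 < r * vR" "0 < r * vU" "0 < r * wC" using r w by simp_all
      have "r * Ws = r * wS + r * vE + r * 1 + r * vR + r * vU + r * wC" unfolding Ws_def by (simp add: algebra_simps)
      thus "r * wS \<le> rho0" "r * vE \<le> rho0" "r * 1 \<le> rho0" "r * vR \<le> rho0" "r * vU \<le> rho0" "r * wC \<le> rho0"
        using pp r by linarith+
    qed
    have rw': "r * wm \<le> r * wS" "r * wm \<le> r * vE" "r * wm \<le> r * 1" "r * wm \<le> r * vR" "r * wm \<le> r * vU" "r * wm \<le> r * wC"
      using wm r by (simp_all add: mult_left_mono)
    have i0: "\<bar>cS (x 0) - SY\<bar> < r * wS" "\<bar>cE (x 0)\<bar> < r * vE" "\<bar>cI (x 0)\<bar> < r * 1"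
      "\<bar>cR (x 0)\<bar> < r * vR" "\<bar>cU (x 0)\<bar> < r * vU" "\<bar>cC (x 0)\<bar> < r * wC"
      using dist_e_ge[of "x 0" SY] x0 rw' unfolding e_def by linarith+
    have D: "\<bar>cS (x t) - SY\<bar> < r * exp (- k * t) * wS \<and> \<bar>cE (x t)\<bar> < r * exp (- k * t) * vE \<and>
      \<bar>cI (x t)\<bar> < r * exp (- k * t) * 1 \<and> \<bar>cR (x t)\<bar> < r * exp (- k * t) * vR \<and>
      \<bar>cU (x t)\<bar> < r * exp (- k * t) * vU \<and> \<bar>cC (x t)\<bar> < r * exp (- k * t) * wC"
      by (rule decay[OF pos k w W1 W2 W3 W4 W5 W6 H[unfolded rho0_def] r(1) rw[unfolded rho0_def] sol i0 t])
    have "dist (x t) e \<le> r * exp (- k * t) * Ws"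
      using dist_e_le[of "x t" SY] D unfolding e_def Ws_def by (simp add: algebra_simps)
    moreover have "r * exp (- k * t) \<le> r" using r k t by simp
    hence "r * exp (- k * t) * wS \<le> r * wS" "r * exp (- k * t) * vE \<le> r * vE" "r * exp (- k * t) * 1 \<le> r * 1"
      "r * exp (- k * t) * vR \<le> r * vR" "r * exp (- k * t) * vU \<le> r * vU" "r * exp (- k * t) * wC \<le> r * wC"
      using w by (simp_all add: mult_right_mono)
    hence "inbox SY rho0 (x t)" unfolding inbox_def using D rw by linarith
    ultimately show ?thesis by simp
  qed
  have stable: "lyap_stable FY e"
    unfolding lyap_stable_def
  proof (intro allI impI)
    fix eps :: real assume eps: "eps > 0"
    define r where "r = min rho0 (eps / 2) / Ws"
    have r: "r > 0" "r * Ws \<le> rho0" "r * Ws \<le> eps / 2" unfolding r_def using rho0 eps Ws by auto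
    show "\<exists>d>0. \<forall>x T. T > 0 \<and> solves_on FY x {0..<T} \<and> dist (x 0) e < d \<longrightarrow> (\<forall>t\<in>{0..<T}. dist (x t) e < eps)"
    proof (intro exI[of _ "r * wm"] conjI allI impI ballI)
      show "r * wm > 0" using r wm by simp
      fix x T t assume a: "T > 0 \<and> solves_on FY x {0..<T} \<and> dist (x 0) e < r * wm" and t: "t \<in> {0..<T}"
      have tt: "0 \<le> t" "t < T" using t by auto
      have triv: "\<And>y. inbox SY rho0 y \<Longrightarrow> FY y = FY y" by simp
      have sol': "solves_on FY x {0..<T}" and x0': "dist (x 0) e < r * wm" using a by auto
      have "dist (x t) e \<le> r * exp (- k * t) * Ws"
        using est[where H=FY and r=r and x=x and T=T and t=t, OF triv r(1) r(2) sol' x0' tt] by (rule conjunct1)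
      also have "\<dots> \<le> r * Ws" using r k t Ws by (simp add: mult_right_mono)
      finally show "dist (x t) e < eps" using r eps by linarith
    qed
  qed
  define r1 where "r1 = rho0 / Ws"
  have r1: "r1 > 0" "r1 * Ws \<le> rho0" unfolding r1_def using rho0 Ws by auto
  define G where "G y = FY (proj SY rho0 y)" for y
  have GH: "G y = FY y" if "inbox SY rho0 y" for y unfolding G_def using proj_id[OF that] by simp
  obtain L where L: "L > 0" "\<And>x y. norm (G x - G y) \<le> L * norm (x - y)"
    using G_lip[OF pos rho0] unfolding G_def by blast
  have attract: "\<exists>d>0. \<forall>x0. dist x0 e < d \<longrightarrow>
        (\<exists>x. x 0 = x0 \<and> solves_on FY x {0..}) \<and>
        (\<forall>x. x 0 = x0 \<and> solves_on FY x {0..} \<longrightarrow> (x \<longlongrightarrow> e) at_top)"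
  proof (intro exI[of _ "r1 * wm"] conjI allI impI)
    show "r1 * wm > 0" using r1 wm by simp
    fix x0 assume x0: "dist x0 e < r1 * wm"
    obtain x where x: "x 0 = x0" "\<forall>t\<in>{0..}. (x has_vector_derivative G (x t)) (at t within {0..})"
      using global_exist[OF L] by blast
    have "inbox SY rho0 (x t)" if "t \<ge> 0" for t
    proof -
      have sol': "solves_on G x {0..<t+1}" using x(2) by (rule sol_subset[where G=G and F=G and T="t+1" and x=x]) simp
      have x0': "dist (x 0) e < r1 * wm" using x0 x by simp
      have tt: "0 \<le> t" "t < t + 1" using that by auto
      show ?thesis
        using est[where H=G and r=r1 and x=x and T="t+1" and t=t, OF GH r1(1) r1(2) sol' x0' tt] by (rule conjunct2)
    qed
    hence inb: "\<And>t. t \<in> {0..} \<Longrightarrow> inbox SY rho0 (x t)" by simp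
    have "solves_on FY x {0..}" unfolding solves_on_def
    proof
      fix t :: real assume t: "t \<in> {0..}"
      have eq: "G (x t) = FY (x t)" using GH[OF inb[OF t]] .
      have d: "(x has_vector_derivative G (x t)) (at t within {0..})" using x(2) t by blast
      show "(x has_vector_derivative FY (x t)) (at t within {0..})" by (subst eq[symmetric]) (rule d)
    qed
    thus "\<exists>x. x 0 = x0 \<and> solves_on FY x {0..}" using x(1) by blast
  next
    fix x0 x assume x0: "dist x0 e < r1 * wm" and x: "x 0 = x0 \<and> solves_on FY x {0..}"
    have bnd: "dist (x t) e \<le> r1 * Ws * exp (- k * t)" if "t \<ge> 0" for t
    proof -
      have "\<forall>t\<in>{0..}. (x has_vector_derivative FY (x t)) (at t within {0..})"
        using x unfolding solves_on_def by blast
      hence sol': "solves_on FY x {0..<t+1}" by (rule sol_subset[where G=FY and F=FY and T="t+1" and x=x]) simp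
      have x0': "dist (x 0) e < r1 * wm" using x0 x by simp
      have tt: "0 \<le> t" "t < t + 1" using that by auto
      have triv: "\<And>y. inbox SY rho0 y \<Longrightarrow> FY y = FY y" by simp
      have "dist (x t) e \<le> r1 * exp (- k * t) * Ws"
        using est[where H=FY and r=r1 and x=x and T="t+1" and t=t, OF triv r1(1) r1(2) sol' x0' tt] by (rule conjunct1)
      thus ?thesis by (simp only: mult.assoc mult.commute[of "exp (- k * t)" Ws])
    qed
    have lim: "((\<lambda>t. r1 * Ws * exp (- k * t)) \<longlongrightarrow> 0) at_top"
      using tendsto_mult_left[OF exp_neg_lim[OF k(1)], of "r1 * Ws"] by simp
    have "((\<lambda>t. dist (x t) e) \<longlongrightarrow> 0) at_top"
    proof (rule tendsto_sandwich[OF _ _ tendsto_const lim])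
      show "eventually (\<lambda>t. 0 \<le> dist (x t) e) at_top" by simp
      show "eventually (\<lambda>t. dist (x t) e \<le> r1 * Ws * exp (- k * t)) at_top"
        using eventually_ge_at_top[of 0] by eventually_elim (rule bnd)
    qed
    thus "(x \<longlongrightarrow> e) at_top" by (rule tendsto_dist_iff[THEN iffD2])
  qed
  show ?thesis using stable attract unfolding loc_asym_stable_def e_def by (rule conjI)
qed


lemma part2:
  assumes R0: "seiruc_R0 Lam beta delta a gamma eta d1 d2 d3 d4 c1 c2 c3 c4 q > 1"
  shows "unstable FY (SY, 0, 0, 0, 0, 0)"
proof -
  obtain k vE vU vR where k: "0 < k" "k \<le> 1" and w: "vU \<ge> 0" "vR \<ge> 0"
    and WU: "vU = gamma * (1 - q) / ((d4 + c4 + eta) + k)"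
    and WR: "vR = (gamma * q + eta * vU) / ((d3 + c3) + k)"
    and WI: "a * vE > (gamma + d2 + c2) + k"
    and WE: "beta * (1 - k) * (1 + vR + vU) > ((a + d1 + c1) + k) * vE"
    using inst_weights[OF pos R0] by blast
  define e where "e = (SY, 0::real, 0::real, 0::real, 0::real, 0::real)"
  define rho0 where "rho0 = SY * k / 20"
  have rho0: "rho0 > 0" "20 * rho0 \<le> SY" unfolding rho0_def using k pos by (auto simp: field_simps)
  define eps where "eps = rho0 / 2"
  have eps: "eps > 0" "eps < rho0" unfolding eps_def using rho0 by auto
  have "0 < a * vE" using WI pos k by linarith
  hence vE0: "vE > 0" using pos(4) by (simp add: zero_less_mult_iff)
  have "\<not> lyap_stable FY e"
  proof
    assume ls: "lyap_stable FY e"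
    obtain d where d: "d > 0" and dd: "\<And>x T. T > 0 \<Longrightarrow> solves_on FY x {0..<T} \<Longrightarrow> dist (x 0) e < d \<Longrightarrow>
        (\<forall>t\<in>{0..<T}. dist (x t) e < eps)"
      using ls eps unfolding lyap_stable_def by meson
    define Sm where "Sm = 2 * vE + 2 + (2 * vR + 1) + (2 * vU + 2)"
    have Sm: "Sm > 0" unfolding Sm_def using vE0 w by simp
    define r where "r = min d eps / (2 * Sm)"
    have r: "r > 0" using d eps Sm unfolding r_def by simp
    have rSm: "r * Sm = min d eps / 2" unfolding r_def using Sm by simp
    define x0 :: state where "x0 = (SY, 2 * r * vE, 2 * r, 2 * r * vR + r, 2 * r * vU + 2 * r, 0)"
    have pr: "0 < r * vE" "0 \<le> r * vR" "0 \<le> r * vU" using r vE0 w by simp_all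
    have "dist x0 e \<le> \<bar>cS x0 - SY\<bar> + \<bar>cE x0\<bar> + \<bar>cI x0\<bar> + \<bar>cR x0\<bar> + \<bar>cU x0\<bar> + \<bar>cC x0\<bar>"
      unfolding e_def by (rule dist_e_le)
    also have "\<dots> = 2 * (r * vE) + 2 * r + (2 * (r * vR) + r) + (2 * (r * vU) + 2 * r)"
      unfolding x0_def using pr r by (simp add: mult.assoc)
    also have "\<dots> = r * Sm" unfolding Sm_def by (simp add: algebra_simps)
    finally have dx0: "dist x0 e < d" "dist x0 e < eps" using rSm d eps by auto
    define G where "G y = FY (proj SY rho0 y)" for y
    have GH: "G y = FY y" if "inbox SY rho0 y" for y unfolding G_def using proj_id[OF that] by simp
    obtain L where L: "L > 0" "\<And>x y. norm (G x - G y) \<le> L * norm (x - y)"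
      using G_lip[OF pos rho0] unfolding G_def by blast
    obtain x where x: "x 0 = x0" "\<forall>t\<in>{0..}. (x has_vector_derivative G (x t)) (at t within {0..})"
      using global_exist[OF L] by blast
    define f where "f s = dist (x s) e" for s
    have fc: "continuous (at s within {0..}) f" if "s \<ge> 0" for s
    proof -
      have "(x has_vector_derivative G (x s)) (at s within {0..})" using x(2) that by simp
      hence "continuous (at s within {0..}) x" by (rule has_vector_derivative_continuous)
      thus ?thesis unfolding f_def by (intro continuous_dist continuous_const)
    qed
    have near: "\<exists>del>0. \<forall>s\<in>{0..}. s \<noteq> tau \<and> dist s tau < del \<longrightarrow> f s < c"
      if "tau \<ge> 0" "f tau < c" for tau c
    proof -
      have "eventually (\<lambda>s. f s < c) (at tau within {0..})"
        using fc[OF that(1)] that(2) unfolding continuous_within by (intro order_tendstoD(2)) auto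
      thus ?thesis unfolding eventually_at by blast
    qed
    have A: "f t < eps" if t: "t \<ge> 0" for t
    proof (rule cont_induct[of "t + 1" "\<lambda>s. f s < eps"])
      fix tau assume tau: "0 \<le> tau" "tau < t + 1" and IH: "\<forall>s\<in>{0..<tau}. f s < eps"
      show "f tau < eps"
      proof (cases "tau = 0")
        case True thus ?thesis using dx0 x(1) unfolding f_def by simp
      next
        case False
        hence tpos: "tau > 0" using tau by simp
        have le: "f tau \<le> eps"
        proof (rule ccontr)
          assume "\<not> f tau \<le> eps"
          hence "eventually (\<lambda>s. eps < f s) (at tau within {0..})"
            using fc[OF tau(1)] unfolding continuous_within by (intro order_tendstoD(1)) auto
          then obtain del where del: "del > 0" "\<forall>s\<in>{0..}. s \<noteq> tau \<and> dist s tau < del \<longrightarrow> eps < f s"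
            unfolding eventually_at by blast
          define s where "s = tau - min del tau / 2"
          have "s \<in> {0..}" "s \<noteq> tau" "dist s tau < del" using del tpos by (auto simp: s_def dist_real_def)
          hence "eps < f s" using del by blast
          moreover have "s \<in> {0..<tau}" using del tpos by (auto simp: s_def)
          ultimately show False using IH by force
        qed
        hence "f tau < rho0" using eps by linarith
        then obtain del where del: "del > 0" "\<forall>s\<in>{0..}. s \<noteq> tau \<and> dist s tau < del \<longrightarrow> f s < rho0"
          using near[OF tau(1)] by blast
        have allr: "f s < rho0" if "s \<in> {0..<tau + del}" for s
        proof (cases "s < tau")
          case True thus ?thesis using IH that eps by force
        next
          case False
          show ?thesis
          proof (cases "s = tau")
            case True thus ?thesis using \<open>f tau < rho0\<close> by simp
          next
            case ne: False
            have "dist s tau < del" using False that by (auto simp: dist_real_def)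
            thus ?thesis using del ne that by auto
          qed
        qed
        have "solves_on FY x {0..<tau + del}"
        proof (rule sol_subset[where G=G and F=FY and T="tau + del" and x=x])
          show "\<forall>t\<in>{0..}. (x has_vector_derivative G (x t)) (at t within {0..})" by (rule x(2))
          fix s assume "0 \<le> s" "s < tau + del"
          hence "f s < rho0" using allr by simp
          hence "inbox SY rho0 (x s)" unfolding f_def e_def by (intro inbox_of_dist) simp
          thus "G (x s) = FY (x s)" by (rule GH)
        qed
        moreover have "tau + del > 0" using tpos del by simp
        moreover have "dist (x 0) e < d" using dx0 x(1) by simp
        ultimately have "\<forall>s\<in>{0..<tau + del}. dist (x s) e < eps" using dd by blast
        thus ?thesis unfolding f_def using tau del by simp
      qed
    next
      fix tau assume tau: "0 \<le> tau" "tau < t + 1" and P: "\<forall>s\<in>{0..tau}. f s < eps"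
      have "f tau < eps" using P tau by simp
      then obtain del where del: "del > 0" "\<forall>s\<in>{0..}. s \<noteq> tau \<and> dist s tau < del \<longrightarrow> f s < eps"
        using near[OF tau(1)] by blast
      show "\<exists>d>0. \<forall>s. tau \<le> s \<and> s < tau + d \<and> s < t + 1 \<longrightarrow> f s < eps"
      proof (intro exI[of _ del] conjI allI impI)
        fix s assume s: "tau \<le> s \<and> s < tau + del \<and> s < t + 1"
        show "f s < eps"
        proof (cases "s = tau")
          case True thus ?thesis using \<open>f tau < eps\<close> by simp
        next
          case False
          have "s \<in> {0..}" "dist s tau < del" using s tau by (auto simp: dist_real_def)
          thus ?thesis using del False by blast
        qed
      qed (rule del(1))
    qed (use t in auto)
    define t where "t = eps / (r * k)"
    have t0: "t \<ge> 0" unfolding t_def using eps r k by simp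
    have inside: "inbox SY (SY * k / 20) (x s)" if "s \<in> {0..<t + 1}" for s
    proof -
      have "f s < eps" using A that by simp
      hence "dist (x s) e \<le> rho0" using eps unfolding f_def by simp
      thus ?thesis using inbox_of_dist unfolding e_def rho0_def by blast
    qed
    have GH': "\<And>y. inbox SY (SY * k / 20) y \<Longrightarrow> G y = FY y" using GH unfolding rho0_def by blast
    have sol: "solves_on G x {0..<t + 1}"
      by (rule sol_subset[where G=G and F=G and T="t + 1" and x=x]) (use x(2) in auto)
    have i1: "cE (x 0) > r * vE" using x(1) pr unfolding x0_def by simp
    have i2: "cI (x 0) > r * 1" using x(1) r unfolding x0_def by simp
    have i3: "cR (x 0) > r * vR" using x(1) pr r unfolding x0_def by simp
    have i4: "cU (x 0) > r * vU + r" using x(1) pr r unfolding x0_def by simp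
    have tt: "0 \<le> t" "t < t + 1" using t0 by auto
    have gr: "cI (x t) > r * exp (k * t) * 1"
      by (rule growth[OF pos k w WU WR WI WE GH' r sol inside i1 i2 i3 i4 tt])
    have "1 + k * t \<le> exp (k * t)" by (rule exp_ge_add_one_self)
    hence "r * (1 + k * t) \<le> r * exp (k * t)" using r by simp
    moreover have "r * (1 + k * t) = r + eps" unfolding t_def using r k by (simp add: field_simps)
    ultimately have big: "r * exp (k * t) * 1 > eps" using r by simp
    have "\<bar>cI (x t)\<bar> \<le> dist (x t) e" unfolding e_def by (rule dist_e_ge)
    moreover have "dist (x t) e < eps" using A[OF t0] unfolding f_def .
    ultimately show False using gr big by linarith
  qed
  thus ?thesis unfolding unstable_def e_def .
qed

end

theorem theorem3:
  fixes Lam beta delta a gamma eta d1 d2 d3 d4 d5 c1 c2 c3 c4 q :: real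
  assumes "Lam > 0" "beta > 0" "delta > 0" "a > 0" "gamma > 0" "eta > 0"
    "d1 > 0" "d2 > 0" "d3 > 0" "d4 > 0" "d5 > 0"
    "c1 > 0" "c2 > 0" "c3 > 0" "c4 > 0" "0 \<le> q" "q \<le> 1"
  shows "(seiruc_R0 Lam beta delta a gamma eta d1 d2 d3 d4 c1 c2 c3 c4 q < 1 \<longrightarrow>
           loc_asym_stable (seiruc_rhs Lam beta delta a gamma eta d1 d2 d3 d4 d5 c1 c2 c3 c4 q)
             (Lam / delta, 0, 0, 0, 0, 0)) \<and>
         (seiruc_R0 Lam beta delta a gamma eta d1 d2 d3 d4 c1 c2 c3 c4 q > 1 \<longrightarrow>
           unstable (seiruc_rhs Lam beta delta a gamma eta d1 d2 d3 d4 d5 c1 c2 c3 c4 q)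
             (Lam / delta, 0, 0, 0, 0, 0))"
proof -
  show ?thesis
    apply (intro conjI impI)
     apply (erule part1[OF assms])
    apply (erule part2[OF assms])
    done
qed

end
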